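(* Suppose Assumptions (A1)–(A3) hold and let $\{\boldsymbol x_k\},\{\boldsymbol v_k\}$ be generated by Algorithm 2 with parameters $\alpha>\beta>0$, $\eta>0$ and $\delta_{i,k}>0$. Define $\tilde\epsilon_1=(\alpha-\beta)\rho_2(L)-\frac12(2+9L_f^2)$, $\tilde\epsilon_2=\beta^2\rho(L)+(2\alpha^2+\beta^2)\rho^2(L)+\frac{15}2L_f^2$, $\epsilon_3=\beta-\frac12-\frac\alpha{2\beta^2}-\frac1{2\beta\rho_2(L)}$, $\epsilon_4=2\beta^2+\frac12$, $\tilde\epsilon_5=\frac18-\frac3{2\beta}(\frac1\beta+\frac1{\rho_2(L)}+\frac\alpha\beta)L_f^2$, $\tilde\epsilon_6=\frac3{\beta^2}(1+\frac1{\rho_2(L)}+\frac\alpha\beta)L_f^2+\frac{L_f(1+3L_f)}2$, $\epsilon_{12}=((\frac1{\beta^2}+\frac1{2\eta\beta})(\frac1{\rho_2(L)}+\frac\alpha\beta)+\frac1{2\eta\beta^2}+\frac1{\beta^2}+\frac12)\frac{3npL_f^2}4$, $\epsilon_{11}=(\frac{15\eta}4+5\eta^2)\frac{3npL_f^2}4+\epsilon_{12}$, and $$U_k=\frac12\|\boldsymbol x_k\|^2_{\boldsymbol K}+\frac12\Big\|\boldsymbol v_k+\frac1\beta\boldsymbol h^0_k\Big\|^2_{\boldsymbol Q+\frac\alpha\beta\boldsymbol K}+\boldsymbol x_k^\top\boldsymbol K\Big(\boldsymbol v_k+\frac1\beta\boldsymbol h^0_k\Big)+n(f(\bar x_k)-f^*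 ).$$ Then for all $k\in\mathbb N_0$, $$U_{k+1}\le U_k-\eta(\tilde\epsilon_1-\eta\tilde\epsilon_2)\|\boldsymbol x_k\|^2_{\boldsymbol K}-\eta(\epsilon_3-\eta\epsilon_4)\Big\|\boldsymbol v_k+\frac1\beta\boldsymbol h^0_k\Big\|^2_{\boldsymbol K}-\eta(\tilde\epsilon_5-\eta\tilde\epsilon_6)\|\bar{\boldsymbol h}_k\|^2-\frac\eta8\|\bar{\boldsymbol g}^0_k\|^2+\epsilon_{11}\delta_k^2+\epsilon_{12}\delta_{k+1}^2.$$
   Context: Setting: $n$ agents on weighted undirected graph $\mathcal G$ with Laplacian $L=(L_{ij})$; $\rho(L)$ largest and $\rho_2(L)$ smallest positive eigenvalue of $L$. $f=\frac1n\sum_if_i$, $f_i:\mathbb R^p\to\mathbb R$, $f^*=\min f$. Assumptions: (A1) $\mathcal G$ connected; (A2) $\arg\min f\ne\emptyset$, $f^*>-\infty$; (A3) each $\nabla f_i$ is $L_f$-Lipschitz. Gradient estimator: $\hat\nabla h(x,\delta)=\frac1\delta\sum_{l=1}^p(h(x+\delta e_l)-h(x))e_l$ with $e_l$ the standard basis. Algorithm 2: $x_{i,0}$ arbitrary, $\sum_jv_{j,0}=\mathbf 0_p$, $x_{i,k+1}=x_{i,k}-\eta(\alpha\sum_jL_{ij}x_{j,k}+\beta v_{i,k}+\hat\nabla f_i(x_{i,k},\delta_{i,k}))$, $v_{i,k+1}=v_{i,k}+\eta\beta\sum_jL_{ij}x_{j,k}$. Notation: $\boldsymbol x_k=\mathrm{col}(x_{i,k})$,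 $\boldsymbol v_k=\mathrm{col}(v_{i,k})$, $\bar x_k=\frac1n\sum_ix_{i,k}$, $\boldsymbol K=(I_n-\frac1n\mathbf 1\mathbf 1^\top)\otimes I_p$, $\boldsymbol H=\frac1n\mathbf 1\mathbf 1^\top\otimes I_p$, $\|z\|^2_M=z^\top Mz$, $\delta_k=\max_i\delta_{i,k}$, $\boldsymbol h_k=\mathrm{col}(\hat\nabla f_i(x_{i,k},\delta_{i,k}))$, $\bar{\boldsymbol h}_k=\boldsymbol H\boldsymbol h_k$, $\boldsymbol h^0_k=\mathrm{col}(\hat\nabla f_i(\bar x_k,\delta_k))$, $\bar{\boldsymbol g}^0_k=\mathbf 1_n\otimes\nabla f(\bar x_k)$. $\boldsymbol Q=R\Lambda_1^{-1}R^\top\otimes I_p$, where $[\frac1{\sqrt n}\mathbf 1_n\ R]$ is orthogonal, the columns of $R$ are orthonormal eigenvectors of $L$ for its nonzero eigenvalues $\lambda_2\le\dots\le\lambda_n$, and $\Lambda_1=\mathrm{diag}(\lambda_2,\dots,\lambda_n)$ (i.e. $R\Lambda_1^{-1}R^\top$ is the pseudoinverse of $L$). *)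

theory Defs
  imports "HOL-Analysis.Analysis"
begin

text \<open>Stacked vectors col(z_1,...,z_n) with z_i in R^p are elements of real^'p^'n.\<close>

text \<open>Action of the Kronecker product (M \<otimes> I_p) on a stacked vector.\<close>
definition kron_act :: "real^'n^'n \<Rightarrow> real^'p^'n \<Rightarrow> real^'p^'n" where
  "kron_act M z = (\<chi> i. \<Sum>j\<in>UNIV. (M$i$j) *\<^sub>R (z$j))"

definition wnorm2 :: "real^'n^'n \<Rightarrow> real^'p^'n \<Rightarrow> real" where
  "wnorm2 M z = inner z (kron_act M z)"

definition Kmat :: "real^'n^'n" where
  "Kmat = (\<chi> i j. (if i = j then 1 else 0) - 1 / real CARD('n))"

definition Hmat :: "real^'n^'n" where
  "Hmat = (\<chi> i j. 1 / real CARD('n))"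

definition laplacian :: "real^'n^'n \<Rightarrow> real^'n^'n" where
  "laplacian a = (\<chi> i j. if i = j then (\<Sum>k\<in>UNIV - {i}. a$i$k) else - a$i$j)"

definition weighted_undirected_graph :: "real^'n^'n \<Rightarrow> bool" where
  "weighted_undirected_graph a \<longleftrightarrow>
     (\<forall>i j. a$i$j = a$j$i) \<and> (\<forall>i j. 0 \<le> a$i$j) \<and> (\<forall>i. a$i$i = 0)"

definition graph_connected :: "real^'n^'n \<Rightarrow> bool" where
  "graph_connected a \<longleftrightarrow> (\<forall>i j. (i, j) \<in> {(k, l). 0 < a$k$l}\<^sup>*)"

definition eigenvalues :: "real^'n^'n \<Rightarrow> real set" where
  "eigenvalues M = {e. \<exists>v. v \<noteq> 0 \<and> M *v v = e *\<^sub>R v}"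

definition rho :: "real^'n^'n \<Rightarrow> real" where
  "rho M = Max (eigenvalues M)"

definition rho2 :: "real^'n^'n \<Rightarrow> real" where
  "rho2 M = Min {e \<in> eigenvalues M. 0 < e}"

text \<open>Moore--Penrose pseudoinverse (for symmetric L this equals R \<Lambda>_1^{-1} R^T).\<close>
definition pinv :: "real^'n^'n \<Rightarrow> real^'n^'n" where
  "pinv M = (THE Q. M ** Q ** M = M \<and> Q ** M ** Q = Q \<and>
                    transpose (M ** Q) = M ** Q \<and> transpose (Q ** M) = Q ** M)"

definition grad_est :: "(real^'p \<Rightarrow> real) \<Rightarrow> real^'p \<Rightarrow> real \<Rightarrow> real^'p" where
  "grad_est h x \<delta> = (1 / \<delta>) *\<^sub>R (\<Sum>l\<in>UNIV. (h (x + \<delta> *\<^sub>R axis l 1) - h x) *\<^sub>R axis l 1)"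

end

theory Submission
  imports Defs
begin


lemma kron_act_mm: "kron_act M z = M ** z"
  unfolding kron_act_def matrix_matrix_mult_def
  by (simp add: vec_eq_iff)

lemma mm_diff_l: "(A::real^'m^'n) ** (B - C) = A ** B - A ** C"
  by (simp add: matrix_matrix_mult_def vec_eq_iff algebra_simps sum_subtractf)
lemma mm_diff_r: "((A::real^'m^'n) - B) ** C = A ** C - B ** C"
  by (simp add: matrix_matrix_mult_def vec_eq_iff algebra_simps sum_subtractf)
lemma mm_add_l: "(A::real^'m^'n) ** (B + C) = A ** B + A ** C"
  by (simp add: matrix_matrix_mult_def vec_eq_iff algebra_simps sum.distrib)
lemma mm_add_r: "((A::real^'m^'n) + B) ** C = A ** C + B ** C"
  by (simp add: matrix_matrix_mult_def vec_eq_iff algebra_simps sum.distrib)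
lemma mm_scale_l: "(A::real^'m^'n) ** (c *\<^sub>R B) = c *\<^sub>R (A ** B)"
  by (simp add: matrix_matrix_mult_def vec_eq_iff algebra_simps sum_distrib_left)
lemma mm_scale_r: "(c *\<^sub>R (A::real^'m^'n)) ** B = c *\<^sub>R (A ** B)"
  by (simp add: matrix_matrix_mult_def vec_eq_iff algebra_simps sum_distrib_left)
lemma mm_zero_l: "(A::real^'m^'n) ** 0 = (0::real^'k^'n)"
  by (simp add: matrix_matrix_mult_def vec_eq_iff)
lemma mm_zero_r: "(0::real^'m^'n) ** B = (0::real^'k^'n)"
  by (simp add: matrix_matrix_mult_def vec_eq_iff)
lemma mm_uminus_l: "(A::real^'m^'n) ** (- B) = - (A ** B)"
  by (simp add: matrix_matrix_mult_def vec_eq_iff sum_negf)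

lemma K_eq: "(Kmat::real^'n^'n) = mat 1 - Hmat"
  by (simp add: Kmat_def Hmat_def mat_def vec_eq_iff)

lemma HH: "(Hmat::real^'n^'n) ** Hmat = Hmat"
  by (simp add: Hmat_def matrix_matrix_mult_def vec_eq_iff)

lemma transpose_H: "transpose (Hmat::real^'n^'n) = Hmat"
  by (simp add: Hmat_def transpose_def vec_eq_iff)

lemma transpose_K: "transpose (Kmat::real^'n^'n) = Kmat"
  by (simp add: Kmat_def transpose_def vec_eq_iff)

lemma KK: "(Kmat::real^'n^'n) ** Kmat = Kmat"
  by (simp add: K_eq mm_add_l mm_add_r mm_diff_l mm_diff_r HH)

lemma HK: "(Hmat::real^'n^'n) ** Kmat = 0"
  by (simp add: K_eq mm_diff_l HH)

lemma KH: "(Kmat::real^'n^'n) ** Hmat = 0"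
  by (simp add: K_eq mm_diff_r HH)

lemma lap_entry:
  assumes "weighted_undirected_graph a"
  shows "laplacian a $ i $ j = (if i = j then (\<Sum>k\<in>UNIV. a$i$k) else 0) - a$i$j"
proof -
  have "(\<Sum>k\<in>UNIV. a$i$k) = a$i$i + (\<Sum>k\<in>UNIV - {i}. a$i$k)"
    by (simp add: sum.remove)
  then show ?thesis using assms
    by (auto simp: laplacian_def weighted_undirected_graph_def)
qed

lemma lap_sym:
  assumes "weighted_undirected_graph a"
  shows "transpose (laplacian a) = laplacian a"
proof -
  have s: "\<And>i j. a$i$j = a$j$i" using assms by (simp add: weighted_undirected_graph_def)
  show ?thesis
    by (auto simp: vec_eq_iff transpose_def lap_entry[OF assms] s)
qed

lemma lap_rowsum:
  assumes "weighted_undirected_graph a"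
  shows "(\<Sum>j\<in>UNIV. laplacian a $ i $ j) = 0"
proof -
  have "(\<Sum>j\<in>UNIV. laplacian a $ i $ j) = (\<Sum>j\<in>UNIV. (if i = j then (\<Sum>k\<in>UNIV. a$i$k) else 0)) - (\<Sum>j\<in>UNIV. a$i$j)"
    by (simp add: lap_entry[OF assms] sum_subtractf)
  also have "\<dots> = 0" by simp
  finally show ?thesis .
qed

lemma lap_colsum:
  assumes "weighted_undirected_graph a"
  shows "(\<Sum>i\<in>UNIV. laplacian a $ i $ j) = 0"
proof -
  have "(\<Sum>i\<in>UNIV. laplacian a $ i $ j) = (\<Sum>i\<in>UNIV. laplacian a $ j $ i)"
    using lap_sym[OF assms] by (metis transpose_def vec_lambda_beta)
  then show ?thesis using lap_rowsum[OF assms] by simp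
qed

lemma LH:
  assumes "weighted_undirected_graph a"
  shows "laplacian a ** Hmat = 0"
  using lap_rowsum[OF assms]
  by (simp add: Hmat_def matrix_matrix_mult_def vec_eq_iff sum_divide_distrib[symmetric])

lemma HL:
  assumes "weighted_undirected_graph a"
  shows "Hmat ** laplacian a = 0"
  using lap_colsum[OF assms]
  by (simp add: Hmat_def matrix_matrix_mult_def vec_eq_iff sum_divide_distrib[symmetric])

lemma LK:
  assumes "weighted_undirected_graph a"
  shows "laplacian a ** Kmat = laplacian a"
  by (simp add: K_eq mm_diff_l LH[OF assms])

lemma KL:
  assumes "weighted_undirected_graph a"
  shows "Kmat ** laplacian a = laplacian a"
  by (simp add: K_eq mm_diff_r HL[OF assms])


lemma quad_zero:
  fixes b c :: real
  assumes "\<And>t. 0 \<le> 2*t*b + t^2*c"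
  shows "b = 0"
proof (rule ccontr)
  assume nz: "b \<noteq> 0"
  define t where "t = - b / (\<bar>c\<bar> + 1)"
  have d: "\<bar>c\<bar> + 1 > 0" by simp
  have "0 \<le> 2*t*b + t^2*c" by (rule assms)
  also have "t^2*c \<le> t^2 * \<bar>c\<bar>" by (simp add: mult_left_mono)
  hence "2*t*b + t^2*c \<le> 2*t*b + t^2*\<bar>c\<bar>" by simp
  also have "2*t*b + t^2*\<bar>c\<bar> = b^2 * (-2*(\<bar>c\<bar>+1) + \<bar>c\<bar>) / (\<bar>c\<bar>+1)^2"
  proof -
    have "2*t*b = b^2 * (-2*(\<bar>c\<bar>+1)) / (\<bar>c\<bar>+1)^2"
      unfolding t_def using d by (simp add: power2_eq_square divide_simps) (simp add: algebra_simps)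
    moreover have "t^2*\<bar>c\<bar> = b^2 * \<bar>c\<bar> / (\<bar>c\<bar>+1)^2"
      unfolding t_def using d by (simp add: power_divide)
    ultimately show ?thesis by (simp add: add_divide_distrib[symmetric] algebra_simps)
  qed
  also have "\<dots> < 0"
    using nz d by (intro divide_neg_pos mult_pos_neg) auto
  finally show False by simp
qed

lemma sym_inner:
  fixes A :: "real^'n^'n"
  assumes "transpose A = A"
  shows "inner u (A *v w) = inner w (A *v u)"
proof -
  have "inner u (A *v w) = inner (u v* A) w" by (simp add: dot_lmul_matrix)
  also have "u v* A = transpose A *v u"
    by (metis transpose_transpose vector_transpose_matrix)
  finally show ?thesis using assms by (simp add: inner_commute)
qed

lemma perturb_min:
  fixes A :: "real^'n^'n" and c z0 y :: "real^'n"
  assumes sym: "transpose A = A"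
    and z0: "norm z0 = 1" "inner c z0 = 0"
    and min: "\<And>u. norm u = 1 \<Longrightarrow> inner c u = 0 \<Longrightarrow> inner z0 (A *v z0) \<le> inner u (A *v u)"
    and y: "inner c y = 0" "inner y z0 = 0"
  shows "inner y (A *v z0) = 0"
proof -
  define m where "m = inner z0 (A *v z0)"
  have "0 \<le> 2*t*(inner y (A *v z0)) + t^2*(inner y (A *v y) - m * (norm y)^2)" for t
  proof -
    define w where "w = z0 + t *\<^sub>R y"
    have zz: "inner z0 z0 = 1" using z0 by (simp add: power2_norm_eq_inner[symmetric])
    have nw: "(norm w)^2 = 1 + t^2 * (norm y)^2"
      unfolding w_def power2_norm_eq_inner using zz y
      by (simp add: inner_add_left inner_add_right inner_commute power2_eq_square algebra_simps)
    have nwpos: "norm w > 0"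
    proof -
      have "(norm w)^2 > 0" using nw by (simp add: add_pos_nonneg)
      thus ?thesis by (metis norm_ge_zero order_le_less power2_eq_square mult_zero_left less_irrefl)
    qed
    have cw: "inner c w = 0" unfolding w_def using z0 y by (simp add: inner_add_right)
    define u where "u = (1 / norm w) *\<^sub>R w"
    have nu: "norm u = 1" unfolding u_def using nwpos by simp
    have cu: "inner c u = 0" unfolding u_def using cw by simp
    have qu: "inner u (A *v u) = inner w (A *v w) / (norm w)^2"
      unfolding u_def by (simp add: matrix_vector_mult_scaleR power2_eq_square)
    have "m \<le> inner w (A *v w) / (norm w)^2" using min[OF nu cu] qu m_def by simp
    hence "m * (norm w)^2 \<le> inner w (A *v w)" using nwpos by (simp add: pos_le_divide_eq)
    moreover have "inner w (A *v w) = m + 2*t*(inner y (A *v z0)) + t^2 * inner y (A *v y)"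
      unfolding w_def m_def
      using sym_inner[OF sym, of y z0]
      by (simp add: matrix_vector_mult_scaleR matrix_vector_right_distrib inner_add_left inner_add_right power2_eq_square algebra_simps)
    ultimately show ?thesis using nw by (simp add: algebra_simps)
  qed
  then show ?thesis by (rule quad_zero)
qed

lemma min_eigen:
  fixes A :: "real^'n^'n" and c z0 :: "real^'n"
  assumes sym: "transpose A = A" and Ac: "A *v c = 0"
    and z0: "norm z0 = 1" "inner c z0 = 0"
    and min: "\<And>u. norm u = 1 \<Longrightarrow> inner c u = 0 \<Longrightarrow> inner z0 (A *v z0) \<le> inner u (A *v u)"
  shows "A *v z0 = inner z0 (A *v z0) *\<^sub>R z0"
proof -
  define m where "m = inner z0 (A *v z0)"
  define y where "y = A *v z0 - m *\<^sub>R z0"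
  have cy: "inner c y = 0"
    unfolding y_def using z0 sym_inner[OF sym, of c z0] Ac by (simp add: inner_diff_right)
  have zz: "inner z0 z0 = 1" using z0 by (simp add: power2_norm_eq_inner[symmetric])
  have yz: "inner y z0 = 0"
  proof -
    have "inner (A *v z0) z0 = m" by (simp add: m_def inner_commute)
    thus ?thesis unfolding y_def using zz by (simp add: inner_diff_left)
  qed
  have "inner y (A *v z0) = 0" by (rule perturb_min[OF sym z0 min cy yz])
  hence "inner y y = 0" using yz
  proof -
    have "inner y y = inner y (A *v z0 - m *\<^sub>R z0)" using y_def by simp
    also have "\<dots> = inner y (A *v z0) - m * inner y z0" by (simp add: inner_diff_right)
    finally have "inner y y = inner y (A *v z0) - m * inner y z0" .
    thus ?thesis using \<open>inner y (A *v z0) = 0\<close> yz by simp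
  qed
  hence "y = 0" by simp
  thus ?thesis unfolding y_def m_def by simp
qed

lemma eigen_finite:
  fixes A :: "real^'n^'n"
  assumes sym: "transpose A = A"
  shows "finite (eigenvalues A)"
proof -
  define ev where "ev e = (SOME v. v \<noteq> 0 \<and> A *v v = e *\<^sub>R v)" for e
  have evp: "ev e \<noteq> 0 \<and> A *v ev e = e *\<^sub>R ev e" if "e \<in> eigenvalues A" for e
    unfolding ev_def using that someI_ex[of "\<lambda>v. v \<noteq> 0 \<and> A *v v = e *\<^sub>R v"]
    by (auto simp: eigenvalues_def)
  have orth: "inner (ev e1) (ev e2) = 0" if "e1 \<in> eigenvalues A" "e2 \<in> eigenvalues A" "e1 \<noteq> e2" for e1 e2
  proof -
    have "inner (ev e1) (A *v ev e2) = inner (ev e2) (A *v ev e1)" by (rule sym_inner[OF sym])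
    hence "e2 * inner (ev e1) (ev e2) = e1 * inner (ev e1) (ev e2)"
      using evp[OF that(1)] evp[OF that(2)] by (simp add: inner_commute)
    thus ?thesis using that(3) by simp
  qed
  have inj: "inj_on ev (eigenvalues A)"
  proof (rule inj_onI)
    fix e1 e2 assume e: "e1 \<in> eigenvalues A" "e2 \<in> eigenvalues A" "ev e1 = ev e2"
    show "e1 = e2"
    proof (rule ccontr)
      assume "e1 \<noteq> e2"
      hence "inner (ev e1) (ev e1) = 0" using orth[OF e(1,2)] e(3) by simp
      thus False using evp[OF e(1)] by simp
    qed
  qed
  have "pairwise orthogonal (ev ` eigenvalues A)"
    unfolding pairwise_def orthogonal_def using orth by auto
  moreover have "0 \<notin> ev ` eigenvalues A" using evp by auto
  ultimately have "independent (ev ` eigenvalues A)" by (rule pairwise_orthogonal_independent)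
  hence "finite (ev ` eigenvalues A)" by (rule finiteI_independent)
  thus ?thesis using inj finite_imageD by blast
qed


definition one_vec :: "real^'n" where "one_vec = (\<chi> i. 1)"

lemma one_vec_nth[simp]: "one_vec $ i = 1" by (simp add: one_vec_def)

lemma inner_one: "inner one_vec u = (\<Sum>i\<in>UNIV. u$i)"
  by (simp add: inner_vec_def one_vec_def)

lemma neg_mv: "(- A) *v (x::real^'n) = - (A *v x)"
  by (simp add: matrix_vector_mult_def vec_eq_iff sum_negf)

lemma transpose_neg: "transpose (- (A::real^'n^'n)) = - transpose A"
  by (simp add: transpose_def vec_eq_iff)

lemma H_mv: "(Hmat::real^'n^'n) *v u = (inner one_vec u / real CARD('n)) *\<^sub>R one_vec"
  by (simp add: Hmat_def matrix_vector_mult_def vec_eq_iff inner_one sum_divide_distrib)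

lemma K_mv: "(Kmat::real^'n^'n) *v u = u - (inner one_vec u / real CARD('n)) *\<^sub>R one_vec"
  by (simp add: K_eq matrix_vector_mult_diff_rdistrib H_mv)

lemma one_K: "inner one_vec ((Kmat::real^'n^'n) *v u) = 0"
proof -
  have "inner one_vec (one_vec::real^'n) = real CARD('n)" by (simp add: inner_one)
  thus ?thesis by (simp add: K_mv inner_diff_right)
qed

lemma mv_mm: "(A ** B) *v x = A *v (B *v (x::real^'n))"
  by (simp add: matrix_vector_mul_assoc)

locale lapG =
  fixes a :: "real^'n^'n"
  assumes wug: "weighted_undirected_graph a" and conn: "graph_connected a" and n2: "CARD('n) \<ge> 2"
begin

abbreviation "L \<equiv> laplacian a"

lemma symL: "transpose L = L" by (rule lap_sym[OF wug])

lemma L_one: "L *v one_vec = 0"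
  using lap_rowsum[OF wug] by (simp add: matrix_vector_mult_def one_vec_def vec_eq_iff)

lemma one_L: "inner one_vec (L *v u) = 0"
  using sym_inner[OF symL, of one_vec u] L_one by simp

lemma a_sym: "a$i$j = a$j$i" using wug by (simp add: weighted_undirected_graph_def)
lemma a_nonneg: "0 \<le> a$i$j" using wug by (simp add: weighted_undirected_graph_def)

lemma quad: "inner u (L *v u) = (1/2) * (\<Sum>i\<in>UNIV. \<Sum>j\<in>UNIV. a$i$j * (u$i - u$j)^2)"
proof -
  have e1: "inner u (L *v u) = (\<Sum>i\<in>UNIV. \<Sum>j\<in>UNIV. a$i$j * (u$i)^2) - (\<Sum>i\<in>UNIV. \<Sum>j\<in>UNIV. a$i$j*u$i*u$j)"
  proof -
    have "inner u (L *v u) = (\<Sum>i\<in>UNIV. u$i * (\<Sum>j\<in>UNIV. L$i$j * u$j))"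
      by (simp add: inner_vec_def matrix_vector_mult_def)
    also have "\<dots> = (\<Sum>i\<in>UNIV. u$i * ((\<Sum>k\<in>UNIV. a$i$k) * u$i - (\<Sum>j\<in>UNIV. a$i$j * u$j)))"
    proof (rule sum.cong[OF refl])
      fix i
      have "(\<Sum>j\<in>UNIV. L$i$j * u$j) = (\<Sum>j\<in>UNIV. (if i = j then (\<Sum>k\<in>UNIV. a$i$k) * u$j else 0) - a$i$j * u$j)"
        by (rule sum.cong[OF refl]) (simp add: lap_entry[OF wug] algebra_simps)
      also have "\<dots> = (\<Sum>k\<in>UNIV. a$i$k) * u$i - (\<Sum>j\<in>UNIV. a$i$j * u$j)"
        by (simp add: sum_subtractf)
      finally show "u$i * (\<Sum>j\<in>UNIV. L$i$j * u$j) = u$i * ((\<Sum>k\<in>UNIV. a$i$k) * u$i - (\<Sum>j\<in>UNIV. a$i$j * u$j))" by simp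
    qed
    also have "\<dots> = (\<Sum>i\<in>UNIV. (\<Sum>j\<in>UNIV. a$i$j * (u$i)^2) - (\<Sum>j\<in>UNIV. a$i$j*u$i*u$j))"
      by (rule sum.cong[OF refl]) (simp add: sum_distrib_left sum_distrib_right power2_eq_square algebra_simps)
    also have "\<dots> = (\<Sum>i\<in>UNIV. \<Sum>j\<in>UNIV. a$i$j * (u$i)^2) - (\<Sum>i\<in>UNIV. \<Sum>j\<in>UNIV. a$i$j*u$i*u$j)"
      by (simp add: sum_subtractf)
    finally show ?thesis .
  qed
  have e2: "(\<Sum>i\<in>UNIV. \<Sum>j\<in>UNIV. a$i$j * (u$j)^2) = (\<Sum>i\<in>UNIV. \<Sum>j\<in>UNIV. a$i$j * (u$i)^2)"
    by (subst sum.swap) (simp add: a_sym)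
  have e3: "(\<Sum>i\<in>UNIV. \<Sum>j\<in>UNIV. a$i$j * (u$i - u$j)^2)
     = (\<Sum>i\<in>UNIV. \<Sum>j\<in>UNIV. a$i$j * (u$i)^2) + (\<Sum>i\<in>UNIV. \<Sum>j\<in>UNIV. a$i$j * (u$j)^2)
       - 2 * (\<Sum>i\<in>UNIV. \<Sum>j\<in>UNIV. a$i$j*u$i*u$j)"
    by (simp add: power2_diff algebra_simps sum.distrib sum_subtractf sum_distrib_left)
  show ?thesis using e1 e2 e3 by simp
qed

lemma psd: "0 \<le> inner u (L *v u)"
  unfolding quad by (intro mult_nonneg_nonneg sum_nonneg) (auto intro: mult_nonneg_nonneg a_nonneg)

lemma kernel:
  assumes q: "inner u (L *v u) = 0" and s: "inner one_vec u = 0"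
  shows "u = 0"
proof -
  have "(\<Sum>i\<in>UNIV. \<Sum>j\<in>UNIV. a$i$j * (u$i - u$j)^2) = 0" using q unfolding quad by simp
  hence "\<forall>i\<in>UNIV. (\<Sum>j\<in>UNIV. a$i$j * (u$i - u$j)^2) = 0"
    by (subst (asm) sum_nonneg_eq_0_iff) (auto intro!: sum_nonneg mult_nonneg_nonneg a_nonneg)
  hence "\<forall>i j. a$i$j * (u$i - u$j)^2 = 0"
    by (subst (asm) sum_nonneg_eq_0_iff) (auto intro!: mult_nonneg_nonneg a_nonneg)
  hence edge: "\<And>i j. 0 < a$i$j \<Longrightarrow> u$i = u$j" by (metis mult_eq_0_iff order_less_irrefl power_eq_0_iff right_minus_eq)
  have path: "u$i = u$j" if "(i, j) \<in> {(k, l). 0 < a$k$l}\<^sup>*" for i j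
    using that by (induction rule: rtrancl_induct) (auto dest: edge)
  obtain i0 where "u $ i0 = u $ i0" by simp
  have const: "\<And>j. u$j = u$i0" using path conn unfolding graph_connected_def by metis
  have "inner one_vec u = (\<Sum>j\<in>(UNIV::'n set). u$i0)" unfolding inner_one by (metis const)
  hence "inner one_vec u = real CARD('n) * u$i0" by simp
  hence "u$i0 = 0" using s by simp
  thus ?thesis using const by (simp add: vec_eq_iff)
qed

lemma LK_mv: "L *v (Kmat *v u) = L *v u"
  by (simp add: mv_mm[symmetric] LK[OF wug])

lemma qK: "inner (Kmat *v u) (L *v (Kmat *v u)) = inner u (L *v u)"
  by (simp only: LK_mv) (simp add: K_mv inner_diff_left one_L)

lemma S0_compact: "compact {u::real^'n. norm u = 1 \<and> inner one_vec u = 0}"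
proof -
  have "{u::real^'n. norm u = 1 \<and> inner one_vec u = 0} = sphere 0 1 \<inter> {u. inner one_vec u = 0}"
    by auto
  moreover have "compact (sphere (0::real^'n) 1 \<inter> {u. inner one_vec u = 0})"
    by (intro compact_Int_closed compact_sphere closed_hyperplane)
  ultimately show ?thesis by simp
qed

lemma S0_ne: "{u::real^'n. norm u = 1 \<and> inner one_vec u = 0} \<noteq> {}"
proof -
  have "1 < CARD('n)" using n2 by simp
  obtain i :: 'n where True by simp
  have "card (UNIV - {i}) = CARD('n) - 1" by (simp add: card_Diff_singleton)
  hence "UNIV - {i} \<noteq> {}" using \<open>1 < CARD('n)\<close> by (metis card.empty less_numeral_extra(3) zero_less_diff)
  then obtain j :: 'n where "j \<in> UNIV - {i}" by blast
  hence ij: "i \<noteq> j" by blast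
  define w :: "real^'n" where "w = axis i 1 - axis j 1"
  have "w $ i = 1" using ij by (simp add: w_def axis_def)
  hence wnz: "w \<noteq> 0" by auto
  have "inner one_vec w = 0" using ij by (simp add: w_def inner_diff_right inner_axis one_vec_def)
  hence "(1 / norm w) *\<^sub>R w \<in> {u::real^'n. norm u = 1 \<and> inner one_vec u = 0}"
    using wnz by simp
  thus ?thesis by blast
qed

lemma exists_min: "\<exists>z0. norm z0 = 1 \<and> inner one_vec z0 = 0 \<and>
   (\<forall>u. norm u = 1 \<longrightarrow> inner one_vec u = 0 \<longrightarrow> inner z0 (L *v z0) \<le> inner u (L *v u))"
proof -
  have "continuous_on {u::real^'n. norm u = 1 \<and> inner one_vec u = 0} (\<lambda>u. inner u (L *v u))"
    by (intro continuous_intros linear_continuous_on matrix_vector_mul_bounded_linear)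
  from continuous_attains_inf[OF S0_compact S0_ne this] show ?thesis by auto
qed

lemma exists_max: "\<exists>z1::real^'n. norm z1 = 1 \<and> (\<forall>u. norm u = 1 \<longrightarrow> inner u (L *v u) \<le> inner z1 (L *v z1))"
proof -
  have "continuous_on (sphere (0::real^'n) 1) (\<lambda>u. inner u (L *v u))"
    by (intro continuous_intros linear_continuous_on matrix_vector_mul_bounded_linear)
  from continuous_attains_sup[OF compact_sphere _ this] show ?thesis by auto
qed

end


lemma transpose_mat1: "transpose (mat 1 :: real^'n^'n) = mat 1"
  by (simp add: transpose_def mat_def vec_eq_iff)

lemma mp_unique:
  fixes A X Y :: "real^'n^'n"
  assumes X1: "A ** X ** A = A" and X2: "X ** A ** X = X"
    and X3: "transpose (A ** X) = A ** X" and X4: "transpose (X ** A) = X ** A"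
    and Y1: "A ** Y ** A = A" and Y2: "Y ** A ** Y = Y"
    and Y3: "transpose (A ** Y) = A ** Y" and Y4: "transpose (Y ** A) = Y ** A"
  shows "X = Y"
proof -
  let ?T = transpose
  have "X = X ** (A ** X)" using X2 by (simp add: matrix_mul_assoc)
  also have "\<dots> = X ** (?T X ** ?T A)" using X3 by (metis matrix_transpose_mul)
  also have "?T A = ?T A ** ?T Y ** ?T A" using Y1 by (metis matrix_transpose_mul matrix_mul_assoc)
  hence "X ** (?T X ** ?T A) = X ** ((?T X ** ?T A) ** (?T Y ** ?T A))"
    by (metis matrix_mul_assoc)
  also have "\<dots> = X ** ((A ** X) ** (A ** Y))"
    using X3 Y3 by (metis matrix_transpose_mul)
  also have "\<dots> = (X ** A ** X) ** A ** Y" by (simp add: matrix_mul_assoc)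
  also have "\<dots> = X ** A ** Y" using X2 by simp
  finally have eX: "X = X ** A ** Y" .
  have "Y = (Y ** A) ** Y" using Y2 by (simp add: matrix_mul_assoc)
  also have "\<dots> = (?T A ** ?T Y) ** Y" using Y4 by (metis matrix_transpose_mul)
  also have "?T A = ?T A ** ?T X ** ?T A" using X1 by (metis matrix_transpose_mul matrix_mul_assoc)
  hence "(?T A ** ?T Y) ** Y = ((?T A ** ?T X) ** (?T A ** ?T Y)) ** Y"
    by (metis matrix_mul_assoc)
  also have "\<dots> = ((X ** A) ** (Y ** A)) ** Y"
    using X4 Y4 by (metis matrix_transpose_mul)
  also have "\<dots> = X ** A ** (Y ** A ** Y)" by (simp add: matrix_mul_assoc)
  also have "\<dots> = X ** A ** Y" using Y2 by simp
  finally show ?thesis using eX by simp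
qed

lemma KK_inner: "inner ((Kmat::real^'n^'n) *v u) (Kmat *v u) = inner u (Kmat *v u)"
proof -
  have "inner (Kmat *v u) (Kmat *v u) = inner u (Kmat *v (Kmat *v u))"
    using sym_inner[OF transpose_K, of "Kmat *v u" u] by (simp add: inner_commute)
  also have "\<dots> = inner u (Kmat *v u)" by (simp add: mv_mm[symmetric] KK)
  finally show ?thesis .
qed

context lapG begin

lemma rho2_props: "0 < rho2 L \<and> (\<forall>u. rho2 L * (norm (Kmat *v u))^2 \<le> inner u (L *v u))"
proof -
  obtain z0 where z0: "norm z0 = 1" "inner one_vec z0 = 0"
    and min: "\<And>u. norm u = 1 \<Longrightarrow> inner one_vec u = 0 \<Longrightarrow> inner z0 (L *v z0) \<le> inner u (L *v u)"
    using exists_min by blast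
  define m where "m = inner z0 (L *v z0)"
  have ev: "L *v z0 = m *\<^sub>R z0" unfolding m_def by (rule min_eigen[OF symL L_one z0 min])
  have z0nz: "z0 \<noteq> 0" using z0 by auto
  have mE: "m \<in> eigenvalues L" using ev z0nz unfolding eigenvalues_def by blast
  have mpos: "0 < m"
  proof -
    have "0 \<le> m" unfolding m_def by (rule psd)
    moreover have "m \<noteq> 0" using kernel[of z0] z0 z0nz unfolding m_def by auto
    ultimately show ?thesis by simp
  qed
  define E where "E = {e \<in> eigenvalues L. 0 < e}"
  have fE: "finite E" unfolding E_def using eigen_finite[OF symL] by simp
  have mE': "m \<in> E" unfolding E_def using mE mpos by simp
  have r2: "rho2 L \<le> m" unfolding rho2_def E_def[symmetric] using fE mE' by simp
  have r2pos: "0 < rho2 L"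
  proof -
    have "rho2 L \<in> E" unfolding rho2_def E_def[symmetric] using fE mE' by (intro Min_in) auto
    thus ?thesis unfolding E_def by simp
  qed
  have "rho2 L * (norm (Kmat *v u))^2 \<le> inner u (L *v u)" for u
  proof -
    define w where "w = Kmat *v u"
    have qw: "inner w (L *v w) = inner u (L *v u)" unfolding w_def by (rule qK)
    show ?thesis
    proof (cases "w = 0")
      case True
      thus ?thesis using qw psd[of u] by (simp add: w_def[symmetric])
    next
      case False
      hence nw: "norm w > 0" by simp
      define v where "v = (1 / norm w) *\<^sub>R w"
      have "norm v = 1" unfolding v_def using nw by simp
      moreover have "inner one_vec v = 0" unfolding v_def w_def by (simp add: one_K)
      ultimately have "m \<le> inner v (L *v v)" using min m_def by simp
      also have "inner v (L *v v) = inner w (L *v w) / (norm w)^2"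
        unfolding v_def by (simp add: matrix_vector_mult_scaleR power2_eq_square)
      finally have "m * (norm w)^2 \<le> inner w (L *v w)" using nw by (simp add: pos_le_divide_eq)
      moreover have "rho2 L * (norm w)^2 \<le> m * (norm w)^2" using r2 by (simp add: mult_right_mono)
      ultimately show ?thesis using qw by (simp add: w_def)
    qed
  qed
  thus ?thesis using r2pos by blast
qed

lemma rho_props: "0 \<le> rho L \<and> (\<forall>u. inner u (L *v u) \<le> rho L * (norm (Kmat *v u))^2)
   \<and> (\<forall>u. (norm (L *v u))^2 \<le> (rho L)^2 * (norm (Kmat *v u))^2)"
proof -
  obtain z1 where z1: "norm z1 = 1"
    and max: "\<And>u. norm u = 1 \<Longrightarrow> inner u (L *v u) \<le> inner z1 (L *v z1)"
    using exists_max by blast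
  define M0 where "M0 = inner z1 (L *v z1)"
  have "(- L) *v z1 = inner z1 ((- L) *v z1) *\<^sub>R z1"
  proof (rule min_eigen[where c = 0])
    show "transpose (- L) = - L" by (simp add: transpose_neg symL)
    show "(- L) *v 0 = 0" by (simp add: neg_mv)
    show "norm z1 = 1" "inner 0 z1 = 0" using z1 by auto
    show "inner z1 ((- L) *v z1) \<le> inner u ((- L) *v u)" if "norm u = 1" "inner 0 u = 0" for u
      using max[OF that(1)] by (simp add: neg_mv)
  qed
  hence ev: "L *v z1 = M0 *\<^sub>R z1" unfolding M0_def by (simp add: neg_mv)
  have "z1 \<noteq> 0" using z1 by auto
  hence ME: "M0 \<in> eigenvalues L" using ev unfolding eigenvalues_def by blast
  have M0r: "M0 \<le> rho L" unfolding rho_def using eigen_finite[OF symL] ME by simp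
  have M0pos: "0 \<le> M0" unfolding M0_def by (rule psd)
  have qb: "inner u (L *v u) \<le> M0 * (norm u)^2" for u
  proof (cases "u = 0")
    case True thus ?thesis by simp
  next
    case False
    hence nu: "norm u > 0" by simp
    define v where "v = (1 / norm u) *\<^sub>R u"
    have "norm v = 1" unfolding v_def using nu by simp
    hence "inner v (L *v v) \<le> M0" using max M0_def by simp
    moreover have "inner v (L *v v) = inner u (L *v u) / (norm u)^2"
      unfolding v_def by (simp add: matrix_vector_mult_scaleR power2_eq_square)
    ultimately show ?thesis using nu by (simp add: pos_divide_le_eq)
  qed
  have b1: "inner u (L *v u) \<le> rho L * (norm (Kmat *v u))^2" for u
  proof -
    have "inner u (L *v u) \<le> M0 * (norm (Kmat *v u))^2" using qb[of "Kmat *v u"] qK[of u] by simp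
    also have "\<dots> \<le> rho L * (norm (Kmat *v u))^2" using M0r by (simp add: mult_right_mono)
    finally show ?thesis .
  qed
  have b0: "(norm (L *v u))^2 \<le> M0 * inner u (L *v u)" for u
  proof -
    define w where "w = L *v u"
    have X: "(norm w)^2 = inner u (L *v w)"
      unfolding w_def power2_norm_eq_inner using sym_inner[OF symL, of u "L *v u"] by simp
    have exp: "0 \<le> t^2 * inner u (L *v u) - 2 * t * (norm w)^2 + inner w (L *v w)" for t
    proof -
      have "0 \<le> inner (t *\<^sub>R u - w) (L *v (t *\<^sub>R u - w))" by (rule psd)
      also have "\<dots> = t^2 * inner u (L *v u) - t * inner u (L *v w) - t * inner w (L *v u) + inner w (L *v w)"
        by (simp add: matrix_vector_mult_diff_distrib matrix_vector_mult_scaleR inner_diff_left inner_diff_right power2_eq_square algebra_simps)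
      also have "inner w (L *v u) = inner u (L *v w)" by (rule sym_inner[OF symL])
      finally show ?thesis using X by (simp add: algebra_simps)
    qed
    have qw: "inner w (L *v w) \<le> M0 * (norm w)^2" by (rule qb)
    show ?thesis
    proof (cases "M0 = 0")
      case True
      have "inner u (L *v u) \<le> 0" using qb[of u] True by simp
      moreover have "inner w (L *v w) \<le> 0" using qw True by simp
      ultimately have "(norm w)^2 \<le> 0" using exp[of 1] by (simp only: power_one mult_1 mult_1_right)
      thus ?thesis using True by (simp add: w_def)
    next
      case False
      hence Mp: "M0 > 0" using M0pos by simp
      have "0 \<le> M0^2 * inner u (L *v u) - M0 * (norm w)^2" using exp[of M0] qw by simp
      hence "M0 * (norm w)^2 \<le> M0 * (M0 * inner u (L *v u))" by (simp add: power2_eq_square algebra_simps)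
      thus ?thesis using Mp by (simp add: w_def)
    qed
  qed
  have b2: "(norm (L *v u))^2 \<le> (rho L)^2 * (norm (Kmat *v u))^2" for u
  proof -
    have "(norm (L *v u))^2 \<le> M0 * inner u (L *v u)" by (rule b0)
    also have "\<dots> \<le> M0 * (M0 * (norm (Kmat *v u))^2)"
      using qb[of "Kmat *v u"] qK[of u] M0pos by (simp add: mult_left_mono)
    also have "\<dots> \<le> (rho L)^2 * (norm (Kmat *v u))^2"
    proof -
      have "M0 * M0 \<le> rho L * rho L" using M0r M0pos by (intro mult_mono) auto
      hence "(M0 * M0) * (norm (Kmat *v u))^2 \<le> (rho L * rho L) * (norm (Kmat *v u))^2"
        by (intro mult_right_mono) auto
      thus ?thesis by (simp add: power2_eq_square mult.assoc)
    qed
    finally show ?thesis .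
  qed
  show ?thesis using b1 b2 M0pos M0r by auto
qed

end


lemma transpose_add: "transpose ((A::real^'n^'n) + B) = transpose A + transpose B"
  by (simp add: transpose_def vec_eq_iff)
lemma transpose_diff: "transpose ((A::real^'n^'n) - B) = transpose A - transpose B"
  by (simp add: transpose_def vec_eq_iff)

context lapG begin

lemma M_inj: "inj ((*v) (L + Hmat))"
proof (rule injI)
  fix x y :: "real^'n"
  assume e: "(L + Hmat) *v x = (L + Hmat) *v y"
  define u where "u = x - y"
  have Mu: "(L + Hmat) *v u = 0" using e unfolding u_def by (simp add: matrix_vector_mult_diff_distrib)
  have one1: "inner one_vec (one_vec::real^'n) = real CARD('n)" by (simp add: inner_one)
  have "inner one_vec ((L + Hmat) *v u) = inner one_vec u"
    by (simp add: matrix_vector_mult_add_rdistrib inner_add_right one_L H_mv one1)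
  hence s: "inner one_vec u = 0" using Mu by simp
  hence "Hmat *v u = 0" by (simp add: H_mv)
  hence "L *v u = 0" using Mu by (simp add: matrix_vector_mult_add_rdistrib)
  hence "u = 0" using kernel[of u] s by simp
  thus "x = y" unfolding u_def by simp
qed

lemma Q_exists: "\<exists>Q. L ** Q = Kmat \<and> Q ** L = Kmat \<and> Kmat ** Q = Q \<and> Q ** Kmat = Q \<and> transpose Q = Q
   \<and> L ** Q ** L = L \<and> Q ** L ** Q = Q"
proof -
  obtain B where B1: "B ** (L + Hmat) = mat 1" using M_inj matrix_left_invertible_injective by blast
  hence B2: "(L + Hmat) ** B = mat 1" using matrix_left_right_inverse by blast
  have HM: "Hmat ** (L + Hmat) = Hmat" by (simp add: mm_add_l HL[OF wug] HH)
  have MH: "(L + Hmat) ** Hmat = Hmat" by (simp add: mm_add_r LH[OF wug] HH)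
  have BH: "B ** Hmat = Hmat" by (metis MH B1 matrix_mul_assoc matrix_mul_lid)
  have HB: "Hmat ** B = Hmat" by (metis HM B2 matrix_mul_assoc matrix_mul_rid)
  have MK: "(L + Hmat) ** Kmat = L" by (simp add: mm_add_r LK[OF wug] HK)
  have KM: "Kmat ** (L + Hmat) = L" by (simp add: mm_add_l KL[OF wug] KH)
  have BL: "B ** L = Kmat" by (metis MK B1 matrix_mul_assoc matrix_mul_lid)
  have LB: "L ** B = Kmat" by (metis KM B2 matrix_mul_assoc matrix_mul_rid)
  define Q where "Q = B - Hmat"
  have LQ: "L ** Q = Kmat" by (simp add: Q_def mm_diff_l LB LH[OF wug])
  have QL: "Q ** L = Kmat" by (simp add: Q_def mm_diff_r BL HL[OF wug])
  have KQ: "Kmat ** Q = Q" by (simp add: Q_def K_eq mm_diff_l mm_diff_r HB HH)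
  have QK: "Q ** Kmat = Q" by (simp add: Q_def K_eq mm_diff_l mm_diff_r BH HH)
  have Msym: "transpose (L + Hmat) = L + Hmat"
    by (simp add: transpose_add symL transpose_H)
  have "transpose (L + Hmat) ** transpose B = mat 1"
    using B1 by (metis matrix_transpose_mul transpose_mat1)
  hence "(L + Hmat) ** transpose B = mat 1" using Msym by simp
  hence BT: "transpose B = B"
  proof -
    assume a: "(L + Hmat) ** transpose B = mat 1"
    have "transpose B = (B ** (L + Hmat)) ** transpose B" by (simp add: B1)
    also have "\<dots> = B ** ((L + Hmat) ** transpose B)" by (simp add: matrix_mul_assoc)
    also have "\<dots> = B" by (simp add: a)
    finally show ?thesis .
  qed
  have QT: "transpose Q = Q"
    by (simp add: Q_def transpose_diff BT transpose_H)
  have "L ** Q ** L = L" by (simp add: LQ KL[OF wug])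
  moreover have "Q ** L ** Q = Q" by (simp add: QL KQ)
  ultimately show ?thesis using LQ QL KQ QK QT by blast
qed

lemma pinv_props: "L ** pinv L = Kmat \<and> pinv L ** L = Kmat \<and> Kmat ** pinv L = pinv L
   \<and> pinv L ** Kmat = pinv L \<and> transpose (pinv L) = pinv L"
proof -
  obtain Q where Q: "L ** Q = Kmat" "Q ** L = Kmat" "Kmat ** Q = Q" "Q ** Kmat = Q" "transpose Q = Q"
     "L ** Q ** L = L" "Q ** L ** Q = Q"
    using Q_exists by blast
  have "pinv L = Q"
    unfolding pinv_def
  proof (rule the_equality)
    show "L ** Q ** L = L \<and> Q ** L ** Q = Q \<and> transpose (L ** Q) = L ** Q \<and> transpose (Q ** L) = Q ** L"
      using Q transpose_K by simp
    fix Y assume Y: "L ** Y ** L = L \<and> Y ** L ** Y = Y \<and> transpose (L ** Y) = L ** Y \<and> transpose (Y ** L) = Y ** L"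
    show "Y = Q"
      using mp_unique[of L Y Q] Y Q transpose_K by simp
  qed
  thus ?thesis using Q by simp
qed

lemma Q_quad: "0 \<le> inner u (pinv L *v u) \<and> rho2 L * inner u (pinv L *v u) \<le> (norm (Kmat *v u))^2"
proof -
  let ?Q = "pinv L"
  have P: "L ** ?Q = Kmat" "Kmat ** ?Q = ?Q" "transpose ?Q = ?Q" using pinv_props by auto
  define y where "y = ?Q *v u"
  have Ly: "L *v y = Kmat *v u" unfolding y_def using P(1) by (simp add: mv_mm[symmetric])
  have Ky: "Kmat *v y = y" unfolding y_def using P(2) by (simp add: mv_mm[symmetric])
  have qy: "inner y (L *v y) = inner u (?Q *v u)"
  proof -
    have "inner y (L *v y) = inner y (Kmat *v u)" by (simp add: Ly)
    also have "\<dots> = inner u (Kmat *v y)" by (rule sym_inner[OF transpose_K])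
    also have "\<dots> = inner u (?Q *v u)" by (simp only: Ky) (simp add: y_def)
    finally show ?thesis .
  qed
  have r: "0 < rho2 L" "rho2 L * (norm (Kmat *v y))^2 \<le> inner y (L *v y)" using rho2_props by auto
  hence r': "rho2 L * (norm y)^2 \<le> inner y (Kmat *v u)" using Ky Ly by simp
  have cs: "inner y (Kmat *v u) \<le> norm y * norm (Kmat *v u)" by (rule norm_cauchy_schwarz)
  have "rho2 L * inner y (Kmat *v u) \<le> (norm (Kmat *v u))^2"
  proof (cases "y = 0")
    case True thus ?thesis by simp
  next
    case False
    hence ny: "norm y > 0" by simp
    have "rho2 L * norm y * norm y \<le> norm y * norm (Kmat *v u)" using r' cs by (simp add: power2_eq_square)
    hence "norm y * (rho2 L * norm y) \<le> norm y * norm (Kmat *v u)" by (simp add: mult.assoc mult.commute)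
    hence "rho2 L * norm y \<le> norm (Kmat *v u)" using ny by (rule mult_left_le_imp_le)
    hence "rho2 L * norm y * norm (Kmat *v u) \<le> norm (Kmat *v u) * norm (Kmat *v u)"
      by (intro mult_right_mono) auto
    moreover have "rho2 L * inner y (Kmat *v u) \<le> rho2 L * (norm y * norm (Kmat *v u))"
      using cs r(1) by (intro mult_left_mono) auto
    ultimately show ?thesis by (simp add: power2_eq_square mult.assoc)
  qed
  moreover have "0 \<le> inner y (L *v y)" by (rule psd)
  ultimately show ?thesis using qy Ly by simp
qed

end


definition colv :: "real^'p^'n \<Rightarrow> 'p \<Rightarrow> real^'n" where "colv z q = (\<chi> i. z$i$q)"

lemma colv_mm: "colv ((A::real^'n^'n) ** z) q = A *v colv z q"
  by (simp add: colv_def matrix_matrix_mult_def matrix_vector_mult_def vec_eq_iff)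

lemma inner_cols: "inner (y::real^'p^'n) z = (\<Sum>q\<in>UNIV. inner (colv y q) (colv z q))"
  by (simp add: inner_vec_def colv_def) (rule sum.swap)

lemma norm_cols: "(norm (z::real^'p^'n))^2 = (\<Sum>q\<in>UNIV. (norm (colv z q))^2)"
  by (simp add: power2_norm_eq_inner inner_cols)

lemma inner_mm_sym:
  assumes "transpose A = (A::real^'n^'n)"
  shows "inner (y::real^'p^'n) (A ** z) = inner z (A ** y)"
  unfolding inner_cols colv_mm using sym_inner[OF assms] by simp

lemma KK_stack: "inner (z::real^'p^'n) (Kmat ** z) = (norm (Kmat ** z))^2"
  unfolding norm_cols inner_cols colv_mm power2_norm_eq_inner
  by (simp add: KK_inner)

context lapG begin

lemma S_rho2: "rho2 L * (norm (Kmat ** (z::real^'p^'n)))^2 \<le> inner z (L ** z)"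
proof -
  have "rho2 L * (norm (Kmat ** z))^2 = (\<Sum>q\<in>UNIV. rho2 L * (norm (Kmat *v colv z q))^2)"
    by (simp add: norm_cols colv_mm sum_distrib_left)
  also have "\<dots> \<le> (\<Sum>q\<in>UNIV. inner (colv z q) (L *v colv z q))"
    using rho2_props by (intro sum_mono) auto
  also have "\<dots> = inner z (L ** z)" by (simp add: inner_cols colv_mm)
  finally show ?thesis .
qed

lemma S_rho: "inner (z::real^'p^'n) (L ** z) \<le> rho L * (norm (Kmat ** z))^2"
proof -
  have "inner z (L ** z) = (\<Sum>q\<in>UNIV. inner (colv z q) (L *v colv z q))" by (simp add: inner_cols colv_mm)
  also have "\<dots> \<le> (\<Sum>q\<in>UNIV. rho L * (norm (Kmat *v colv z q))^2)"
    using rho_props by (intro sum_mono) auto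
  also have "\<dots> = rho L * (norm (Kmat ** z))^2"
    by (simp add: norm_cols colv_mm sum_distrib_left)
  finally show ?thesis .
qed

lemma S_rhosq: "(norm (L ** (z::real^'p^'n)))^2 \<le> (rho L)^2 * (norm (Kmat ** z))^2"
proof -
  have "(norm (L ** z))^2 = (\<Sum>q\<in>UNIV. (norm (L *v colv z q))^2)" by (simp add: norm_cols colv_mm)
  also have "\<dots> \<le> (\<Sum>q\<in>UNIV. (rho L)^2 * (norm (Kmat *v colv z q))^2)"
    using rho_props by (intro sum_mono) auto
  also have "\<dots> = (rho L)^2 * (norm (Kmat ** z))^2"
    by (simp add: norm_cols colv_mm sum_distrib_left)
  finally show ?thesis .
qed

lemma S_Q: "0 \<le> inner (z::real^'p^'n) (pinv L ** z) \<and> rho2 L * inner z (pinv L ** z) \<le> (norm (Kmat ** z))^2"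
proof -
  have e: "inner z (pinv L ** z) = (\<Sum>q\<in>UNIV. inner (colv z q) (pinv L *v colv z q))" by (simp add: inner_cols colv_mm)
  have "0 \<le> inner z (pinv L ** z)" unfolding e using Q_quad by (intro sum_nonneg) auto
  moreover have "rho2 L * inner z (pinv L ** z) \<le> (norm (Kmat ** z))^2"
  proof -
    have "rho2 L * inner z (pinv L ** z) = (\<Sum>q\<in>UNIV. rho2 L * inner (colv z q) (pinv L *v colv z q))"
      unfolding e by (simp add: sum_distrib_left)
    also have "\<dots> \<le> (\<Sum>q\<in>UNIV. (norm (Kmat *v colv z q))^2)"
      using Q_quad by (intro sum_mono) auto
    also have "\<dots> = (norm (Kmat ** z))^2" by (simp add: norm_cols colv_mm)
    finally show ?thesis .
  qed
  ultimately show ?thesis by simp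
qed

end


lemma young1: "inner (a::'a::real_inner) b \<le> 1/2 * (norm a)^2 + 1/2 * (norm b)^2"
proof -
  have "0 \<le> (norm (a - b))^2" by simp
  also have "(norm (a - b))^2 = (norm a)^2 - 2 * inner a b + (norm b)^2"
    by (simp add: power2_norm_eq_inner inner_diff_left inner_diff_right inner_commute)
  finally show ?thesis by simp
qed

lemma young_t:
  assumes "t > 0"
  shows "inner (a::'a::real_inner) b \<le> t/2 * (norm a)^2 + 1/(2*t) * (norm b)^2"
proof -
  have "0 \<le> (norm (t *\<^sub>R a - b))^2" by simp
  also have "(norm (t *\<^sub>R a - b))^2 = t^2 * (norm a)^2 - 2 * t * inner a b + (norm b)^2"
    unfolding power2_norm_eq_inner by (simp add: inner_diff_left inner_diff_right inner_commute power2_eq_square algebra_simps)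
  finally have h: "2 * t * inner a b \<le> t^2 * (norm a)^2 + (norm b)^2" by simp
  have "inner a b = (2 * t * inner a b) / (2 * t)" using assms by simp
  also have "\<dots> \<le> (t^2 * (norm a)^2 + (norm b)^2) / (2 * t)"
    using h assms by (intro divide_right_mono) auto
  also have "\<dots> = t/2 * (norm a)^2 + 1/(2*t) * (norm b)^2"
    using assms by (simp add: field_simps power2_eq_square)
  finally show ?thesis .
qed

lemma norm3: "(norm ((u::'a::real_inner) + v + w))^2 \<le> 3 * ((norm u)^2 + (norm v)^2 + (norm w)^2)"
proof -
  have "(norm (u + v + w))^2 = (norm u)^2 + (norm v)^2 + (norm w)^2 + 2 * inner u v + 2 * inner u w + 2 * inner v w"
    by (simp add: power2_norm_eq_inner inner_add_left inner_add_right inner_commute)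
  moreover have "inner u v \<le> 1/2 * (norm u)^2 + 1/2 * (norm v)^2" by (rule young1)
  moreover have "inner u w \<le> 1/2 * (norm u)^2 + 1/2 * (norm w)^2" by (rule young1)
  moreover have "inner v w \<le> 1/2 * (norm v)^2 + 1/2 * (norm w)^2" by (rule young1)
  ultimately have "(norm (u + v + w))^2 \<le> 3 * (norm u)^2 + 3 * (norm v)^2 + 3 * (norm w)^2" by linarith
  thus ?thesis by simp
qed

lemma norm2_3: "(norm ((u::'a::real_inner) + v))^2 \<le> 3 * (norm u)^2 + 3/2 * (norm v)^2"
proof -
  have "(norm (u + v))^2 = (norm u)^2 + (norm v)^2 + 2 * inner u v"
    by (simp add: power2_norm_eq_inner inner_add_left inner_add_right inner_commute)
  moreover have "inner u v \<le> 2/2 * (norm u)^2 + 1/(2*2) * (norm v)^2" by (rule young_t) simp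
  ultimately show ?thesis by simp
qed


lemma path_deriv:
  fixes \<phi> :: "'a::real_inner \<Rightarrow> real"
  assumes d: "\<And>y. GDERIV \<phi> y :> G y"
  shows "((\<lambda>t. \<phi> (y + t *\<^sub>R dd)) has_real_derivative inner (G (y + t *\<^sub>R dd)) dd) (at t)"
proof -
  have p: "((\<lambda>t. y + t *\<^sub>R dd) has_derivative (\<lambda>s. s *\<^sub>R dd)) (at t)"
    by (auto intro!: derivative_eq_intros)
  have g: "(\<phi> has_derivative (\<lambda>h. inner h (G (y + t *\<^sub>R dd)))) (at (y + t *\<^sub>R dd))"
    using d unfolding gderiv_def by blast
  have "((\<lambda>t. \<phi> (y + t *\<^sub>R dd)) has_derivative (\<lambda>s. inner (s *\<^sub>R dd) (G (y + t *\<^sub>R dd)))) (at t)"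
    using has_derivative_compose[OF p g] .
  moreover have "(\<lambda>s. inner (s *\<^sub>R dd) (G (y + t *\<^sub>R dd))) = (*) (inner (G (y + t *\<^sub>R dd)) dd)"
    by (auto simp: inner_commute)
  ultimately show ?thesis unfolding has_field_derivative_def by simp
qed

lemma descent_upper:
  fixes \<phi> :: "'a::real_inner \<Rightarrow> real"
  assumes d: "\<And>y. GDERIV \<phi> y :> G y"
    and lip: "\<And>y z. norm (G y - G z) \<le> Lf * norm (y - z)"
  shows "\<phi> z \<le> \<phi> y + inner (G y) (z - y) + Lf / 2 * (norm (z - y))^2"
proof -
  define dd where "dd = z - y"
  define \<psi> where "\<psi> t = \<phi> (y + t *\<^sub>R dd) - t * inner (G y) dd - Lf / 2 * t^2 * (norm dd)^2" for t
  have "\<psi> 1 \<le> \<psi> 0"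
  proof (rule DERIV_nonpos_imp_nonincreasing[of 0 1])
    fix t :: real assume t: "0 \<le> t" "t \<le> 1"
    have pd: "((\<lambda>t. \<phi> (y + t *\<^sub>R dd)) has_real_derivative inner (G (y + t *\<^sub>R dd)) dd) (at t)"
      by (rule path_deriv[OF d])
    have "(\<psi> has_real_derivative (inner (G (y + t *\<^sub>R dd)) dd - inner (G y) dd - Lf / 2 * (2 * t) * (norm dd)^2)) (at t)"
      unfolding \<psi>_def
      using pd by (auto intro!: derivative_eq_intros)
    moreover have "inner (G (y + t *\<^sub>R dd)) dd - inner (G y) dd - Lf / 2 * (2 * t) * (norm dd)^2 \<le> 0"
    proof -
      have "inner (G (y + t *\<^sub>R dd)) dd - inner (G y) dd = inner (G (y + t *\<^sub>R dd) - G y) dd"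
        by (simp add: inner_diff_left)
      also have "\<dots> \<le> norm (G (y + t *\<^sub>R dd) - G y) * norm dd" by (rule norm_cauchy_schwarz)
      also have "\<dots> \<le> (Lf * norm (t *\<^sub>R dd)) * norm dd"
        using lip[of "y + t *\<^sub>R dd" y] by (intro mult_right_mono) auto
      also have "\<dots> = Lf / 2 * (2 * t) * (norm dd)^2" using t by (simp add: power2_eq_square)
      finally show ?thesis by simp
    qed
    ultimately show "\<exists>D. (\<psi> has_real_derivative D) (at t) \<and> D \<le> 0" by blast
  qed auto
  thus ?thesis unfolding \<psi>_def dd_def by simp
qed

lemma descent_abs:
  fixes \<phi> :: "'a::real_inner \<Rightarrow> real"
  assumes d: "\<And>y. GDERIV \<phi> y :> G y"
    and lip: "\<And>y z. norm (G y - G z) \<le> Lf * norm (y - z)"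
  shows "\<bar>\<phi> z - \<phi> y - inner (G y) (z - y)\<bar> \<le> Lf / 2 * (norm (z - y))^2"
proof -
  have u: "\<phi> z \<le> \<phi> y + inner (G y) (z - y) + Lf / 2 * (norm (z - y))^2" by (rule descent_upper[OF d lip])
  have d': "GDERIV (\<lambda>x. - \<phi> x) y :> - G y" for y
  proof -
    have "((\<lambda>x. - \<phi> x) has_derivative (\<lambda>h. - inner h (G y))) (at y)"
      using d[of y] unfolding gderiv_def by (intro has_derivative_minus) auto
    thus ?thesis unfolding gderiv_def by simp
  qed
  have lip': "norm (- G y - - G z) \<le> Lf * norm (y - z)" for y z
    using lip[of y z] by (simp add: norm_minus_commute)
  have l: "- \<phi> z \<le> - \<phi> y + inner (- G y) (z - y) + Lf / 2 * (norm (z - y))^2"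
    by (rule descent_upper[OF d' lip'])
  have l': "- \<phi> z \<le> - \<phi> y - inner (G y) (z - y) + Lf / 2 * (norm (z - y))^2" using l by simp
  show ?thesis using u l' by (simp only: abs_le_iff) (intro conjI; linarith)
qed

lemma grad_est_nth: "grad_est h x \<delta> $ l = (h (x + \<delta> *\<^sub>R axis l 1) - h x) / \<delta>"
  by (simp add: grad_est_def axis_def if_distrib cong: if_cong)

lemma est_err:
  fixes \<phi> :: "real^'p \<Rightarrow> real"
  assumes d: "\<And>y. GDERIV \<phi> y :> G y"
    and lip: "\<And>y z. norm (G y - G z) \<le> Lf * norm (y - z)"
    and dp: "\<delta> > 0"
  shows "(norm (grad_est \<phi> x \<delta> - G x))^2 \<le> real CARD('p) * Lf^2 * \<delta>^2 / 4"
proof -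
  have comp: "((grad_est \<phi> x \<delta> - G x) $ l)^2 \<le> Lf^2 * \<delta>^2 / 4" for l
  proof -
    have "\<bar>\<phi> (x + \<delta> *\<^sub>R axis l 1) - \<phi> x - inner (G x) (\<delta> *\<^sub>R axis l 1)\<bar> \<le> Lf / 2 * (norm (\<delta> *\<^sub>R axis l (1::real)))^2"
      using descent_abs[OF d lip, of "x + \<delta> *\<^sub>R axis l 1" x] by simp
    also have "\<dots> = Lf / 2 * \<delta>^2" using dp by simp
    finally have b: "\<bar>\<phi> (x + \<delta> *\<^sub>R axis l 1) - \<phi> x - \<delta> * G x $ l\<bar> \<le> Lf / 2 * \<delta>^2"
      by (simp add: inner_axis)
    have "(grad_est \<phi> x \<delta> - G x) $ l = (\<phi> (x + \<delta> *\<^sub>R axis l 1) - \<phi> x - \<delta> * G x $ l) / \<delta>"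
      using dp by (simp add: grad_est_nth field_simps)
    hence "\<bar>(grad_est \<phi> x \<delta> - G x) $ l\<bar> \<le> Lf / 2 * \<delta>"
      using b dp by (simp add: abs_divide divide_le_eq power2_eq_square mult.assoc)
    hence "\<bar>(grad_est \<phi> x \<delta> - G x) $ l\<bar>^2 \<le> (Lf / 2 * \<delta>)^2" by (intro power_mono) auto
    thus ?thesis by (simp add: power_mult_distrib power_divide)
  qed
  have "(norm (grad_est \<phi> x \<delta> - G x))^2 = (\<Sum>l\<in>UNIV. ((grad_est \<phi> x \<delta> - G x) $ l)^2)"
    unfolding power2_norm_eq_inner inner_vec_def by (simp add: power2_eq_square)
  also have "\<dots> \<le> (\<Sum>l\<in>(UNIV::'p set). Lf^2 * \<delta>^2 / 4)" by (intro sum_mono comp)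
  also have "\<dots> = real CARD('p) * Lf^2 * \<delta>^2 / 4" by simp
  finally show ?thesis .
qed


lemma final_arith:
  fixes \<eta> \<alpha> \<beta> \<rho> rtwo Lf c d d' n p qL nA Wk E D Lxx hb g G dPhi Fd :: real
  assumes pos: "\<eta> > 0" "\<beta> > 0" "\<alpha> > \<beta>" "rtwo > 0" "Lf \<ge> 0" "n \<ge> 0" "p \<ge> 0" "d \<ge> 0" "d' \<ge> 0"
    "hb \<ge> 0" "g \<ge> 0"
  and c_def: "c = 3 * n * p * Lf^2 / 4"
  and \<kappa>_def: "\<kappa> = 1 / rtwo + \<alpha> / \<beta>"
  and HPhi: "dPhi \<le> - \<eta> * (\<alpha> - \<beta>) * qL
      + (\<eta>/2 * nA + \<eta>/2 * E)
      + (\<eta>/2 * E + \<eta>/2 * Wk)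
      + (1 / (2*\<eta>*\<beta>) * \<kappa> * D + \<eta> / (2*\<beta>) * \<kappa> * Wk)
      + (\<eta>/2 * nA + 1 / (2*\<eta>*\<beta>^2) * D)
      - \<eta> * \<beta> * Wk
      + (\<eta>^2 * \<beta>^2 * qL + \<eta>^2 * \<alpha> * \<beta> * Lxx + 1 / \<beta>^2 * \<kappa> * D)
      + \<eta>^2 * (3/2) * (\<alpha>^2 * Lxx + \<beta>^2 * Wk + E)
      + (- (\<eta>^2 * \<alpha> * \<beta> * Lxx) + \<eta>^2 * \<beta>^2 / 2 * (Wk + Lxx) + \<eta>^2 * (\<beta>^2 / 2 * Lxx + 1/2 * E))
      + (\<eta>^2 * \<alpha>^2 / 2 * Lxx + 1 / (2*\<beta>^2) * D + \<eta>^2 / 2 * Wk + 1/2 * D + \<eta>^2 / 2 * E + 1 / (2*\<beta>^2) * D)"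
  and HF: "Fd \<le> \<eta>/2 * G - \<eta>/2 * g - \<eta>/2 * hb + Lf/2 * \<eta>^2 * hb"
  and HE: "E \<le> 3 * Lf^2 * nA + 2 * c * d"
  and HD: "D \<le> 3 * Lf^2 * \<eta>^2 * hb + c * d' + c * d"
  and HG: "G \<le> 3 * Lf^2 * nA + c * d / 2"
  and Hq1: "rtwo * nA \<le> qL" and Hq2: "qL \<le> \<rho> * nA" and HL: "Lxx \<le> \<rho>^2 * nA"
  and e1: "epsA = (\<alpha> - \<beta>) * rtwo - (1/2) * (2 + 9 * Lf\<^sup>2)"
  and e2: "epsB = \<beta>\<^sup>2 * \<rho> + (2 * \<alpha>\<^sup>2 + \<beta>\<^sup>2) * \<rho>\<^sup>2 + (15/2) * Lf\<^sup>2"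
  and e3: "epsC = \<beta> - 1/2 - \<alpha> / (2 * \<beta>\<^sup>2) - 1 / (2 * \<beta> * rtwo)"
  and e4: "epsD = 2 * \<beta>\<^sup>2 + 1/2"
  and e5: "epsE = 1/8 - 3 / (2 * \<beta>) * (1 / \<beta> + 1 / rtwo + \<alpha> / \<beta>) * Lf\<^sup>2"
  and e6: "epsF = 3 / \<beta>\<^sup>2 * (1 + 1 / rtwo + \<alpha> / \<beta>) * Lf\<^sup>2 + Lf * (1 + 3 * Lf) / 2"
  and e12: "epsL = ((1 / \<beta>\<^sup>2 + 1 / (2 * \<eta> * \<beta>)) * (1 / rtwo + \<alpha> / \<beta>)
                    + 1 / (2 * \<eta> * \<beta>\<^sup>2) + 1 / \<beta>\<^sup>2 + 1/2) * (3 * n * p * Lf\<^sup>2 / 4)"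
  and e11: "epsK = (15 * \<eta> / 4 + 5 * \<eta>\<^sup>2) * (3 * n * p * Lf\<^sup>2 / 4) + epsL"
  shows "dPhi + Fd \<le> - \<eta> * (epsA - \<eta> * epsB) * nA - \<eta> * (epsC - \<eta> * epsD) * Wk
           - \<eta> * (epsE - \<eta> * epsF) * hb - \<eta> / 8 * g + epsK * d + epsL * d'"
proof -
  define P where "P = 1 / (2*\<eta>*\<beta>) * \<kappa> + 1 / (2*\<eta>*\<beta>^2) + 1 / \<beta>^2 * \<kappa> + 1 / (2*\<beta>^2) + 1/2 + 1 / (2*\<beta>^2)"
  have kpos: "\<kappa> \<ge> 0" unfolding \<kappa>_def using pos by simp
  have Ppos: "P \<ge> 0" unfolding P_def using pos kpos by simp
  have cpos: "c \<ge> 0" unfolding c_def using pos by simp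
  have m1: "(\<eta> + 5/2*\<eta>^2) * E \<le> (\<eta> + 5/2*\<eta>^2) * (3 * Lf^2 * nA + 2 * c * d)"
    using HE pos by (intro mult_left_mono) auto
  have m2: "P * D \<le> P * (3 * Lf^2 * \<eta>^2 * hb + c * d' + c * d)"
    using HD Ppos by (intro mult_left_mono) auto
  have m3: "\<eta>/2 * G \<le> \<eta>/2 * (3 * Lf^2 * nA + c * d / 2)"
    using HG pos by (intro mult_left_mono) auto
  have m4: "\<eta> * (\<alpha> - \<beta>) * (rtwo * nA) \<le> \<eta> * (\<alpha> - \<beta>) * qL"
    using Hq1 pos by (intro mult_left_mono) auto
  have m5: "\<eta>^2 * \<beta>^2 * qL \<le> \<eta>^2 * \<beta>^2 * (\<rho> * nA)"
    using Hq2 pos by (intro mult_left_mono) auto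
  have m6: "\<eta>^2 * (2*\<alpha>^2 + \<beta>^2) * Lxx \<le> \<eta>^2 * (2*\<alpha>^2 + \<beta>^2) * (\<rho>^2 * nA)"
    using HL pos by (intro mult_left_mono) auto
  have s1: "0 \<le> 3*\<eta>/8 * hb + 3*\<eta>/8 * g + 3/2 * \<eta> * c * d" using pos cpos by simp
  have S: "dPhi + Fd \<le> - \<eta> * (\<alpha> - \<beta>) * qL + \<eta> * nA + (\<eta> + 5/2*\<eta>^2) * E
      + (- \<eta> * \<beta> + \<eta>/2 + \<eta> / (2*\<beta>) * \<kappa> + \<eta>^2 * (3/2*\<beta>^2 + \<beta>^2/2 + 1/2)) * Wk
      + P * D + \<eta>^2 * \<beta>^2 * qL + \<eta>^2 * (2*\<alpha>^2 + \<beta>^2) * Lxx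
      + \<eta>/2 * G - \<eta>/2 * g - \<eta>/2 * hb + Lf/2 * \<eta>^2 * hb"
  proof -
    have "dPhi \<le> - \<eta> * (\<alpha> - \<beta>) * qL + \<eta> * nA + (\<eta> + 5/2*\<eta>^2) * E
      + (- \<eta> * \<beta> + \<eta>/2 + \<eta> / (2*\<beta>) * \<kappa> + \<eta>^2 * (3/2*\<beta>^2 + \<beta>^2/2 + 1/2)) * Wk
      + P * D + \<eta>^2 * \<beta>^2 * qL + \<eta>^2 * (2*\<alpha>^2 + \<beta>^2) * Lxx"
    proof -
      have "- \<eta> * (\<alpha> - \<beta>) * qL
      + (\<eta>/2 * nA + \<eta>/2 * E)
      + (\<eta>/2 * E + \<eta>/2 * Wk)
      + (1 / (2*\<eta>*\<beta>) * \<kappa> * D + \<eta> / (2*\<beta>) * \<kappa> * Wk)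
      + (\<eta>/2 * nA + 1 / (2*\<eta>*\<beta>^2) * D)
      - \<eta> * \<beta> * Wk
      + (\<eta>^2 * \<beta>^2 * qL + \<eta>^2 * \<alpha> * \<beta> * Lxx + 1 / \<beta>^2 * \<kappa> * D)
      + \<eta>^2 * (3/2) * (\<alpha>^2 * Lxx + \<beta>^2 * Wk + E)
      + (- (\<eta>^2 * \<alpha> * \<beta> * Lxx) + \<eta>^2 * \<beta>^2 / 2 * (Wk + Lxx) + \<eta>^2 * (\<beta>^2 / 2 * Lxx + 1/2 * E))
      + (\<eta>^2 * \<alpha>^2 / 2 * Lxx + 1 / (2*\<beta>^2) * D + \<eta>^2 / 2 * Wk + 1/2 * D + \<eta>^2 / 2 * E + 1 / (2*\<beta>^2) * D) = - \<eta> * (\<alpha> - \<beta>) * qL + \<eta> * nA + (\<eta> + 5/2*\<eta>^2) * E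
      + (- \<eta> * \<beta> + \<eta>/2 + \<eta> / (2*\<beta>) * \<kappa> + \<eta>^2 * (3/2*\<beta>^2 + \<beta>^2/2 + 1/2)) * Wk
      + P * D + \<eta>^2 * \<beta>^2 * qL + \<eta>^2 * (2*\<alpha>^2 + \<beta>^2) * Lxx"
        unfolding P_def using pos by (simp add: field_simps power2_eq_square)
      thus ?thesis using HPhi by linarith
    qed
    thus ?thesis using HF by linarith
  qed
  have EQ: "(- \<eta> * (epsA - \<eta> * epsB) * nA - \<eta> * (epsC - \<eta> * epsD) * Wk
           - \<eta> * (epsE - \<eta> * epsF) * hb - \<eta> / 8 * g + epsK * d + epsL * d')
     - (- \<eta> * (\<alpha> - \<beta>) * (rtwo * nA) + \<eta> * nA + (\<eta> + 5/2*\<eta>^2) * (3 * Lf^2 * nA + 2 * c * d)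
      + (- \<eta> * \<beta> + \<eta>/2 + \<eta> / (2*\<beta>) * \<kappa> + \<eta>^2 * (3/2*\<beta>^2 + \<beta>^2/2 + 1/2)) * Wk
      + P * (3 * Lf^2 * \<eta>^2 * hb + c * d' + c * d) + \<eta>^2 * \<beta>^2 * (\<rho> * nA) + \<eta>^2 * (2*\<alpha>^2 + \<beta>^2) * (\<rho>^2 * nA)
      + \<eta>/2 * (3 * Lf^2 * nA + c * d / 2) - \<eta>/2 * g - \<eta>/2 * hb + Lf/2 * \<eta>^2 * hb)
     = 3*\<eta>/8 * hb + 3*\<eta>/8 * g + 3/2 * \<eta> * c * d"
    unfolding e1 e2 e3 e4 e5 e6 e11 e12 P_def \<kappa>_def c_def
    using pos by (simp add: field_simps power2_eq_square)
  show ?thesis using S EQ m1 m2 m3 m4 m5 m6 s1 by linarith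
qed


definition PhiF :: "real^'n^'n \<Rightarrow> real \<Rightarrow> real \<Rightarrow> real^'p^'n \<Rightarrow> real^'p^'n \<Rightarrow> real" where
  "PhiF Q \<alpha> \<beta> X W = 1/2 * inner X (Kmat ** X) + 1/2 * inner W ((Q + (\<alpha>/\<beta>) *\<^sub>R Kmat) ** W) + inner X (Kmat ** W)"

lemma sK: "inner (y::real^'p^'n) (Kmat ** z) = inner z (Kmat ** y)"
  by (rule inner_mm_sym[OF transpose_K])

lemma sK': "inner (Kmat ** (y::real^'p^'n)) z = inner y (Kmat ** z)"
  by (simp add: sK inner_commute)

lemma KKs: "Kmat ** (Kmat ** (z::real^'p^'n)) = Kmat ** z"
  by (simp add: matrix_mul_assoc KK)

lemma inner_KK: "inner (y::real^'p^'n) (Kmat ** z) = inner (Kmat ** y) (Kmat ** z)"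
  by (metis KKs sK')

lemma normK_le: "(norm (Kmat ** (z::real^'p^'n)))^2 \<le> (norm z)^2"
proof -
  have o: "inner (Kmat ** z) (z - Kmat ** z) = 0"
    using KK_stack[of z] by (simp add: inner_diff_right sK' power2_norm_eq_inner)
  have "(norm z)^2 = (norm (Kmat ** z + (z - Kmat ** z)))^2" by simp
  also have "\<dots> = (norm (Kmat ** z))^2 + (norm (z - Kmat ** z))^2 + 2 * inner (Kmat ** z) (z - Kmat ** z)"
    by (simp only: power2_norm_eq_inner inner_add_left inner_add_right inner_commute)
  finally show ?thesis using o by simp
qed

context lapG begin

lemma sL: "inner (y::real^'p^'n) (L ** z) = inner z (L ** y)"
  by (rule inner_mm_sym[OF symL])

lemma sQ: "inner (y::real^'p^'n) (pinv L ** z) = inner z (pinv L ** y)"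
  using pinv_props by (intro inner_mm_sym) auto

lemma KLs: "Kmat ** (L ** (z::real^'p^'n)) = L ** z"
  by (simp add: matrix_mul_assoc KL[OF wug])

lemma QLs: "pinv L ** (L ** (z::real^'p^'n)) = Kmat ** z"
  using pinv_props by (simp add: matrix_mul_assoc)

lemma core_vec:
  fixes X V hh hz hp :: "real^'p^'n" and \<alpha> \<beta> \<eta> :: real
  assumes bp: "\<beta> > 0" and ep: "\<eta> > 0" and ab: "\<alpha> > \<beta>" and KV: "Kmat ** V = V"
  defines "W \<equiv> V + (1/\<beta>) *\<^sub>R hz"
  defines "\<kappa> \<equiv> 1 / rho2 L + \<alpha> / \<beta>"
  shows "PhiF (pinv L) \<alpha> \<beta> (X - \<eta> *\<^sub>R (\<alpha> *\<^sub>R (L ** X) + \<beta> *\<^sub>R V + hh)) ((V + (\<eta> * \<beta>) *\<^sub>R (L ** X)) + (1/\<beta>) *\<^sub>R hp)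
       - PhiF (pinv L) \<alpha> \<beta> X W \<le>
      - \<eta> * (\<alpha> - \<beta>) * inner X (L ** X)
      + (\<eta>/2 * (norm (Kmat ** X))^2 + \<eta>/2 * (norm (Kmat ** (hh - hz)))^2)
      + (\<eta>/2 * (norm (Kmat ** (hh - hz)))^2 + \<eta>/2 * (norm (Kmat ** W))^2)
      + (1 / (2*\<eta>*\<beta>) * \<kappa> * (norm (hp - hz))^2 + \<eta> / (2*\<beta>) * \<kappa> * (norm (Kmat ** W))^2)
      + (\<eta>/2 * (norm (Kmat ** X))^2 + 1 / (2*\<eta>*\<beta>^2) * (norm (hp - hz))^2)
      - \<eta> * \<beta> * (norm (Kmat ** W))^2
      + (\<eta>^2 * \<beta>^2 * inner X (L ** X) + \<eta>^2 * \<alpha> * \<beta> * (norm (L ** X))^2 + 1 / \<beta>^2 * \<kappa> * (norm (hp - hz))^2)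
      + \<eta>^2 * (3/2) * (\<alpha>^2 * (norm (L ** X))^2 + \<beta>^2 * (norm (Kmat ** W))^2 + (norm (Kmat ** (hh - hz)))^2)
      + (- (\<eta>^2 * \<alpha> * \<beta> * (norm (L ** X))^2) + \<eta>^2 * \<beta>^2 / 2 * ((norm (Kmat ** W))^2 + (norm (L ** X))^2)
           + \<eta>^2 * (\<beta>^2 / 2 * (norm (L ** X))^2 + 1/2 * (norm (Kmat ** (hh - hz)))^2))
      + (\<eta>^2 * \<alpha>^2 / 2 * (norm (L ** X))^2 + 1 / (2*\<beta>^2) * (norm (hp - hz))^2 + \<eta>^2 / 2 * (norm (Kmat ** W))^2
           + 1/2 * (norm (hp - hz))^2 + \<eta>^2 / 2 * (norm (Kmat ** (hh - hz)))^2 + 1 / (2*\<beta>^2) * (norm (hp - hz))^2)"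
proof -
  let ?K = "Kmat :: real^'n^'n"
  let ?Q = "pinv L"
  define M where "M = ?Q + (\<alpha>/\<beta>) *\<^sub>R ?K"
  define LX where "LX = L ** X"
  define s where "s = \<alpha> *\<^sub>R LX + \<beta> *\<^sub>R V + hh"
  define \<Delta> where "\<Delta> = hp - hz"
  define r where "r = (\<eta> * \<beta>) *\<^sub>R LX + (1/\<beta>) *\<^sub>R \<Delta>"
  define e where "e = ?K ** (hh - hz)"
  define KW where "KW = ?K ** W"
  define KX where "KX = ?K ** X"
  have bnz: "\<beta> \<noteq> 0" using bp by simp
  have W'eq: "(V + (\<eta> * \<beta>) *\<^sub>R (L ** X)) + (1/\<beta>) *\<^sub>R hp = W + r"
    unfolding W_def r_def \<Delta>_def LX_def by (simp add: algebra_simps)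
  have X'eq: "X - \<eta> *\<^sub>R (\<alpha> *\<^sub>R (L ** X) + \<beta> *\<^sub>R V + hh) = X - \<eta> *\<^sub>R s"
    unfolding s_def LX_def ..
  have sM: "inner y (M ** z) = inner z (M ** y)" for y z :: "real^'p^'n"
    unfolding M_def by (simp add: mm_add_r mm_scale_r inner_add_right sQ[of y] sK[of y])
  have psdM: "0 \<le> inner z (M ** z)" for z :: "real^'p^'n"
  proof -
    have "0 \<le> inner z (?Q ** z)" using S_Q by blast
    moreover have "0 \<le> (\<alpha>/\<beta>) * inner z (?K ** z)" using KK_stack[of z] ab bp by simp
    ultimately show ?thesis unfolding M_def by (simp add: mm_add_r mm_scale_r inner_add_right)
  qed
  have Mbound: "inner z (M ** z) \<le> \<kappa> * (norm (?K ** z))^2" for z :: "real^'p^'n"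
  proof -
    have r2: "0 < rho2 L" using rho2_props by blast
    have "rho2 L * inner z (?Q ** z) \<le> (norm (?K ** z))^2" using S_Q by blast
    hence "inner z (?Q ** z) \<le> 1 / rho2 L * (norm (?K ** z))^2" using r2 by (simp add: field_simps mult.commute)
    thus ?thesis unfolding M_def \<kappa>_def by (simp add: mm_add_r mm_scale_r inner_add_right KK_stack algebra_simps)
  qed
  have EXP: "PhiF ?Q \<alpha> \<beta> (X - \<eta> *\<^sub>R s) (W + r) - PhiF ?Q \<alpha> \<beta> X W =
      - \<eta> * inner X (?K ** s) + \<eta>^2/2 * inner s (?K ** s) + inner r (M ** W) + 1/2 * inner r (M ** r)
      + inner X (?K ** r) - \<eta> * inner s (?K ** W) - \<eta> * inner s (?K ** r)"
  proof -
    have a1: "inner (X - \<eta> *\<^sub>R s) (?K ** (X - \<eta> *\<^sub>R s)) = inner X (?K ** X) - 2 * \<eta> * inner X (?K ** s) + \<eta>^2 * inner s (?K ** s)"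
      by (simp add: mm_diff_l mm_scale_l inner_diff_left inner_diff_right sK[of s X] power2_eq_square algebra_simps)
    have a2: "inner (W + r) (M ** (W + r)) = inner W (M ** W) + 2 * inner r (M ** W) + inner r (M ** r)"
      by (simp add: mm_add_l inner_add_left inner_add_right sM[of W r])
    have a3: "inner (X - \<eta> *\<^sub>R s) (?K ** (W + r)) = inner X (?K ** W) + inner X (?K ** r) - \<eta> * inner s (?K ** W) - \<eta> * inner s (?K ** r)"
      by (simp add: mm_add_l inner_diff_left inner_add_right algebra_simps)
    show ?thesis unfolding PhiF_def M_def[symmetric] using a1 a2 a3 by (simp add: algebra_simps)
  qed
  have KV': "?K ** W = V + (1/\<beta>) *\<^sub>R (?K ** hz)" unfolding W_def by (simp add: mm_add_l mm_scale_l KV)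
  have Ks: "?K ** s = \<alpha> *\<^sub>R LX + \<beta> *\<^sub>R KW + e"
    unfolding s_def KW_def e_def KV' LX_def using bnz
    by (simp add: mm_add_l mm_scale_l mm_diff_l KLs KV algebra_simps)
  have i1: "inner X (?K ** s) = \<alpha> * inner X LX + \<beta> * inner KX KW + inner KX e"
  proof -
    have "inner X (?K ** s) = inner KX (?K ** s)" unfolding KX_def by (metis KKs sK')
    also have "\<dots> = \<alpha> * inner KX LX + \<beta> * inner KX KW + inner KX e" by (simp add: Ks inner_add_right)
    also have "inner KX LX = inner X LX" unfolding KX_def LX_def by (simp add: sK' KLs)
    finally show ?thesis .
  qed
  have i2: "inner s (?K ** s) = (norm (\<alpha> *\<^sub>R LX + \<beta> *\<^sub>R KW + e))^2"
    by (simp add: power2_norm_eq_inner Ks[symmetric] inner_KK[of s s])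
  have iLQ: "inner LX (?Q ** z) = inner KX (?K ** z)" for z :: "real^'p^'n"
    unfolding LX_def KX_def using sQ[of "L ** X" z] QLs[of X] inner_KK[of z X] by (simp add: inner_commute)
  have i3: "inner r (M ** W) = \<eta> * \<beta> * inner KX KW + \<eta> * \<alpha> * inner LX KW + 1/\<beta> * inner \<Delta> (M ** W)"
  proof -
    have "inner LX (M ** W) = inner KX KW + \<alpha>/\<beta> * inner LX KW"
      unfolding M_def KW_def by (simp add: mm_add_r mm_scale_r inner_add_right iLQ)
    thus ?thesis unfolding r_def using bnz by (simp add: inner_add_left algebra_simps)
  qed
  have i4: "inner X (?K ** r) = \<eta> * \<beta> * inner X LX + 1/\<beta> * inner KX \<Delta>"
    unfolding r_def KX_def LX_def by (simp add: mm_add_l mm_scale_l inner_add_right KLs sK')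
  have i5: "inner s (?K ** W) = \<alpha> * inner LX KW + \<beta> * (norm KW)^2 + inner e KW"
  proof -
    have "inner s (?K ** W) = inner (?K ** s) KW" unfolding KW_def by (metis KKs sK')
    thus ?thesis by (simp add: Ks inner_add_left power2_norm_eq_inner)
  qed
  have i6: "inner s (?K ** r) = \<eta> * \<beta> * inner (?K ** s) LX + 1/\<beta> * inner (?K ** s) \<Delta>"
    unfolding r_def LX_def by (simp add: mm_add_l mm_scale_l inner_add_right KLs sK' sK[of s])
  have iKs: "inner (?K ** s) z = \<alpha> * inner LX z + \<beta> * inner KW z + inner e z" for z
    by (simp add: Ks inner_add_left)
  have ID: "PhiF ?Q \<alpha> \<beta> (X - \<eta> *\<^sub>R s) (W + r) - PhiF ?Q \<alpha> \<beta> X W =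
      - \<eta> * (\<alpha> - \<beta>) * inner X LX - \<eta> * inner KX e - \<eta> * \<beta> * (norm KW)^2 - \<eta> * inner e KW
      + 1/\<beta> * inner \<Delta> (M ** W) + 1/\<beta> * inner KX \<Delta>
      + \<eta>^2/2 * (norm (\<alpha> *\<^sub>R LX + \<beta> *\<^sub>R KW + e))^2 + 1/2 * inner r (M ** r)
      - \<eta>^2 * \<beta> * (\<alpha> * (norm LX)^2 + \<beta> * inner KW LX + inner e LX)
      - \<eta> / \<beta> * (\<alpha> * inner LX \<Delta> + \<beta> * inner KW \<Delta> + inner e \<Delta>)"
    unfolding EXP i1 i2 i3 i4 i5 i6 iKs using bnz
    by (simp add: power2_norm_eq_inner inner_commute field_simps) (simp add: power2_eq_square algebra_simps)
  have nKX: "(norm KX)^2 = (norm (?K ** X))^2" unfolding KX_def ..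
  have b2: "- \<eta> * inner KX e \<le> \<eta>/2 * (norm KX)^2 + \<eta>/2 * (norm e)^2"
  proof -
    have "inner (- KX) e \<le> 1/2 * (norm (- KX))^2 + 1/2 * (norm e)^2" by (rule young1)
    hence "\<eta> * inner (- KX) e \<le> \<eta> * (1/2 * (norm KX)^2 + 1/2 * (norm e)^2)"
      using ep by (intro mult_left_mono) auto
    thus ?thesis by (simp add: algebra_simps)
  qed
  have b3: "- \<eta> * inner e KW \<le> \<eta>/2 * (norm e)^2 + \<eta>/2 * (norm KW)^2"
  proof -
    have "inner (- e) KW \<le> 1/2 * (norm (- e))^2 + 1/2 * (norm KW)^2" by (rule young1)
    hence "\<eta> * inner (- e) KW \<le> \<eta> * (1/2 * (norm e)^2 + 1/2 * (norm KW)^2)"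
      using ep by (intro mult_left_mono) auto
    thus ?thesis by (simp add: algebra_simps)
  qed
  have DK: "(norm (?K ** \<Delta>))^2 \<le> (norm \<Delta>)^2" by (rule normK_le)
  have kpos: "\<kappa> \<ge> 0" unfolding \<kappa>_def using rho2_props bp ab by simp
  have b4: "1/\<beta> * inner \<Delta> (M ** W) \<le> 1 / (2*\<eta>*\<beta>) * \<kappa> * (norm \<Delta>)^2 + \<eta> / (2*\<beta>) * \<kappa> * (norm KW)^2"
  proof -
    have "0 \<le> inner (\<Delta> - \<eta> *\<^sub>R W) (M ** (\<Delta> - \<eta> *\<^sub>R W))" by (rule psdM)
    also have "\<dots> = inner \<Delta> (M ** \<Delta>) - 2 * \<eta> * inner \<Delta> (M ** W) + \<eta>^2 * inner W (M ** W)"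
      by (simp add: mm_diff_l mm_scale_l inner_diff_left inner_diff_right sM[of W \<Delta>] power2_eq_square algebra_simps)
    finally have "2 * \<eta> * inner \<Delta> (M ** W) \<le> inner \<Delta> (M ** \<Delta>) + \<eta>^2 * inner W (M ** W)" by simp
    also have "\<dots> \<le> \<kappa> * (norm \<Delta>)^2 + \<eta>^2 * (\<kappa> * (norm KW)^2)"
    proof -
      have "inner \<Delta> (M ** \<Delta>) \<le> \<kappa> * (norm (?K ** \<Delta>))^2" by (rule Mbound)
      also have "\<dots> \<le> \<kappa> * (norm \<Delta>)^2" using DK kpos by (intro mult_left_mono) auto
      finally have x: "inner \<Delta> (M ** \<Delta>) \<le> \<kappa> * (norm \<Delta>)^2" .
      have "inner W (M ** W) \<le> \<kappa> * (norm KW)^2" unfolding KW_def by (rule Mbound)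
      hence "\<eta>^2 * inner W (M ** W) \<le> \<eta>^2 * (\<kappa> * (norm KW)^2)" by (intro mult_left_mono) auto
      thus ?thesis using x by linarith
    qed
    finally have y: "2 * \<eta> * inner \<Delta> (M ** W) \<le> \<kappa> * (norm \<Delta>)^2 + \<eta>^2 * (\<kappa> * (norm KW)^2)" .
    have "1/\<beta> * inner \<Delta> (M ** W) = (2 * \<eta> * inner \<Delta> (M ** W)) / (2 * \<eta> * \<beta>)" using ep bp by simp
    also have "\<dots> \<le> (\<kappa> * (norm \<Delta>)^2 + \<eta>^2 * (\<kappa> * (norm KW)^2)) / (2 * \<eta> * \<beta>)"
      using y ep bp by (intro divide_right_mono) auto
    also have "\<dots> = 1 / (2*\<eta>*\<beta>) * \<kappa> * (norm \<Delta>)^2 + \<eta> / (2*\<beta>) * \<kappa> * (norm KW)^2"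
      using ep bp by (simp add: field_simps power2_eq_square)
    finally show ?thesis .
  qed
  have b5: "1/\<beta> * inner KX \<Delta> \<le> \<eta>/2 * (norm KX)^2 + 1 / (2*\<eta>*\<beta>^2) * (norm \<Delta>)^2"
  proof -
    have "inner KX ((1/\<beta>) *\<^sub>R \<Delta>) \<le> \<eta>/2 * (norm KX)^2 + 1/(2*\<eta>) * (norm ((1/\<beta>) *\<^sub>R \<Delta>))^2"
      using ep by (rule young_t)
    thus ?thesis using bp by (simp add: power2_eq_square field_simps)
  qed
  have b7: "\<eta>^2/2 * (norm (\<alpha> *\<^sub>R LX + \<beta> *\<^sub>R KW + e))^2 \<le> \<eta>^2 * (3/2) * (\<alpha>^2 * (norm LX)^2 + \<beta>^2 * (norm KW)^2 + (norm e)^2)"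
  proof -
    have "(norm (\<alpha> *\<^sub>R LX + \<beta> *\<^sub>R KW + e))^2 \<le> 3 * ((norm (\<alpha> *\<^sub>R LX))^2 + (norm (\<beta> *\<^sub>R KW))^2 + (norm e)^2)"
      by (rule norm3)
    hence "\<eta>^2/2 * (norm (\<alpha> *\<^sub>R LX + \<beta> *\<^sub>R KW + e))^2 \<le> \<eta>^2/2 * (3 * ((norm (\<alpha> *\<^sub>R LX))^2 + (norm (\<beta> *\<^sub>R KW))^2 + (norm e)^2))"
      by (intro mult_left_mono) auto
    thus ?thesis by (simp add: power_mult_distrib algebra_simps)
  qed
  have b8: "1/2 * inner r (M ** r) \<le> \<eta>^2 * \<beta>^2 * inner X LX + \<eta>^2 * \<alpha> * \<beta> * (norm LX)^2 + 1 / \<beta>^2 * \<kappa> * (norm \<Delta>)^2"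
  proof -
    define u where "u = (\<eta> * \<beta>) *\<^sub>R LX"
    define v where "v = (1/\<beta>) *\<^sub>R \<Delta>"
    have ruv: "r = u + v" unfolding r_def u_def v_def ..
    have "0 \<le> inner (u - v) (M ** (u - v))" by (rule psdM)
    hence "2 * inner u (M ** v) \<le> inner u (M ** u) + inner v (M ** v)"
      by (simp add: mm_diff_l inner_diff_left inner_diff_right sM[of v u])
    hence "1/2 * inner r (M ** r) \<le> inner u (M ** u) + inner v (M ** v)"
      unfolding ruv by (simp add: mm_add_l inner_add_left inner_add_right sM[of v u])
    moreover have "inner u (M ** u) = \<eta>^2 * \<beta>^2 * inner X LX + \<eta>^2 * \<alpha> * \<beta> * (norm LX)^2"
    proof -
      have "inner LX (M ** LX) = inner X LX + \<alpha>/\<beta> * (norm LX)^2"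
      proof -
        have "inner LX (?Q ** LX) = inner KX (?K ** LX)" by (rule iLQ)
        also have "\<dots> = inner X LX" unfolding KX_def LX_def by (simp add: KLs sK')
        finally show ?thesis unfolding M_def LX_def
          by (simp add: mm_add_r mm_scale_r inner_add_right KLs power2_norm_eq_inner)
      qed
      note hM = this
      have "inner u (M ** u) = (\<eta>*\<beta>)^2 * inner LX (M ** LX)" unfolding u_def by (simp add: mm_scale_l power2_eq_square)
      also have "\<dots> = (\<eta>*\<beta>)^2 * (inner X LX + \<alpha>/\<beta> * (norm LX)^2)" using hM by simp
      also have "\<dots> = \<eta>^2 * \<beta>^2 * inner X LX + \<eta>^2 * \<alpha> * \<beta> * (norm LX)^2" using bnz by (simp add: power2_eq_square field_simps)
      finally show ?thesis .
    qed
    moreover have "inner v (M ** v) \<le> 1 / \<beta>^2 * \<kappa> * (norm \<Delta>)^2"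
    proof -
      have "inner v (M ** v) = 1/\<beta>^2 * inner \<Delta> (M ** \<Delta>)" unfolding v_def by (simp add: mm_scale_l power2_eq_square)
      also have "inner \<Delta> (M ** \<Delta>) \<le> \<kappa> * (norm \<Delta>)^2"
        using Mbound[of \<Delta>] DK kpos by (meson mult_left_mono order_trans)
      hence "1/\<beta>^2 * inner \<Delta> (M ** \<Delta>) \<le> 1/\<beta>^2 * (\<kappa> * (norm \<Delta>)^2)" by (intro mult_left_mono) auto
      finally show ?thesis by simp
    qed
    ultimately show ?thesis by linarith
  qed
  have b9: "- (\<eta>^2 * \<beta> * (\<alpha> * (norm LX)^2 + \<beta> * inner KW LX + inner e LX)) \<le>
      - (\<eta>^2 * \<alpha> * \<beta> * (norm LX)^2) + \<eta>^2 * \<beta>^2 / 2 * ((norm KW)^2 + (norm LX)^2)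
           + \<eta>^2 * (\<beta>^2 / 2 * (norm LX)^2 + 1/2 * (norm e)^2)"
  proof -
    have y1: "inner (- KW) LX \<le> 1/2 * (norm (- KW))^2 + 1/2 * (norm LX)^2" by (rule young1)
    have y2: "inner (- e) (\<beta> *\<^sub>R LX) \<le> 1/2 * (norm (- e))^2 + 1/2 * (norm (\<beta> *\<^sub>R LX))^2" by (rule young1)
    have c1: "\<eta>^2 * \<beta>^2 * inner (- KW) LX \<le> \<eta>^2 * \<beta>^2 * (1/2 * (norm (- KW))^2 + 1/2 * (norm LX)^2)"
      using y1 by (intro mult_left_mono) auto
    have c2: "\<eta>^2 * inner (- e) (\<beta> *\<^sub>R LX) \<le> \<eta>^2 * (1/2 * (norm (- e))^2 + 1/2 * (norm (\<beta> *\<^sub>R LX))^2)"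
      using y2 by (intro mult_left_mono) auto
    have "- (\<eta>^2 * \<beta> * (\<alpha> * (norm LX)^2 + \<beta> * inner KW LX + inner e LX))
        = - (\<eta>^2 * \<alpha> * \<beta> * (norm LX)^2) + \<eta>^2 * \<beta>^2 * inner (- KW) LX + \<eta>^2 * inner (- e) (\<beta> *\<^sub>R LX)"
      by (simp add: algebra_simps power2_eq_square)
    also have "\<dots> \<le> - (\<eta>^2 * \<alpha> * \<beta> * (norm LX)^2) + \<eta>^2 * \<beta>^2 * (1/2 * (norm (- KW))^2 + 1/2 * (norm LX)^2)
         + \<eta>^2 * (1/2 * (norm (- e))^2 + 1/2 * (norm (\<beta> *\<^sub>R LX))^2)"
      using c1 c2 by (intro add_mono order_refl)
    also have "\<dots> = - (\<eta>^2 * \<alpha> * \<beta> * (norm LX)^2) + \<eta>^2 * \<beta>^2 / 2 * ((norm KW)^2 + (norm LX)^2)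
           + \<eta>^2 * (\<beta>^2 / 2 * (norm LX)^2 + 1/2 * (norm e)^2)"
      by (simp add: power_mult_distrib field_simps)
    finally show ?thesis .
  qed
  have b10: "- (\<eta> / \<beta> * (\<alpha> * inner LX \<Delta> + \<beta> * inner KW \<Delta> + inner e \<Delta>)) \<le>
      \<eta>^2 * \<alpha>^2 / 2 * (norm LX)^2 + 1 / (2*\<beta>^2) * (norm \<Delta>)^2 + \<eta>^2 / 2 * (norm KW)^2
           + 1/2 * (norm \<Delta>)^2 + \<eta>^2 / 2 * (norm e)^2 + 1 / (2*\<beta>^2) * (norm \<Delta>)^2"
  proof -
    have y1: "inner ((- (\<eta> * \<alpha>)) *\<^sub>R LX) ((1/\<beta>) *\<^sub>R \<Delta>) \<le> 1/2 * (norm ((- (\<eta> * \<alpha>)) *\<^sub>R LX))^2 + 1/2 * (norm ((1/\<beta>) *\<^sub>R \<Delta>))^2"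
      by (rule young1)
    have y2: "inner ((- \<eta>) *\<^sub>R KW) \<Delta> \<le> 1/2 * (norm ((- \<eta>) *\<^sub>R KW))^2 + 1/2 * (norm \<Delta>)^2" by (rule young1)
    have y3: "inner ((- \<eta>) *\<^sub>R e) ((1/\<beta>) *\<^sub>R \<Delta>) \<le> 1/2 * (norm ((- \<eta>) *\<^sub>R e))^2 + 1/2 * (norm ((1/\<beta>) *\<^sub>R \<Delta>))^2"
      by (rule young1)
    have "- (\<eta> / \<beta> * (\<alpha> * inner LX \<Delta> + \<beta> * inner KW \<Delta> + inner e \<Delta>)) =
        inner ((- (\<eta> * \<alpha>)) *\<^sub>R LX) ((1/\<beta>) *\<^sub>R \<Delta>) + inner ((- \<eta>) *\<^sub>R KW) \<Delta> + inner ((- \<eta>) *\<^sub>R e) ((1/\<beta>) *\<^sub>R \<Delta>)"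
      using bnz by (simp add: field_simps)
    also have "\<dots> \<le> (1/2 * (norm ((- (\<eta> * \<alpha>)) *\<^sub>R LX))^2 + 1/2 * (norm ((1/\<beta>) *\<^sub>R \<Delta>))^2)
        + (1/2 * (norm ((- \<eta>) *\<^sub>R KW))^2 + 1/2 * (norm \<Delta>)^2)
        + (1/2 * (norm ((- \<eta>) *\<^sub>R e))^2 + 1/2 * (norm ((1/\<beta>) *\<^sub>R \<Delta>))^2)"
      using y1 y2 y3 by linarith
    also have "\<dots> = \<eta>^2 * \<alpha>^2 / 2 * (norm LX)^2 + 1 / (2*\<beta>^2) * (norm \<Delta>)^2 + \<eta>^2 / 2 * (norm KW)^2
           + 1/2 * (norm \<Delta>)^2 + \<eta>^2 / 2 * (norm e)^2 + 1 / (2*\<beta>^2) * (norm \<Delta>)^2"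
      using bnz by (simp add: power_mult_distrib power2_eq_square field_simps)
    finally show ?thesis .
  qed
  have Ee: "(norm e)^2 = (norm (?K ** (hh - hz)))^2" unfolding e_def ..
  show ?thesis
    unfolding X'eq W'eq ID
    using b2 b3 b4 b5 b7 b8 b9 b10
    unfolding KX_def KW_def e_def \<Delta>_def LX_def
    by linarith
qed

end


lemma stack_norm: "(norm (z::real^'p^'n))^2 = (\<Sum>i\<in>UNIV. (norm (z$i))^2)"
  by (simp add: power2_norm_eq_inner inner_vec_def)

lemma mm_row: "((A::real^'n^'n) ** (z::real^'p^'n)) $ i = (\<Sum>j\<in>UNIV. (A$i$j) *\<^sub>R (z$j))"
  by (simp add: kron_act_mm[symmetric] kron_act_def)

lemma H_row: "((Hmat::real^'n^'n) ** (z::real^'p^'n)) $ i = (1 / real CARD('n)) *\<^sub>R (\<Sum>j\<in>UNIV. z$j)"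
  by (simp add: mm_row Hmat_def scaleR_sum_right)

lemma K_row: "((Kmat::real^'n^'n) ** (z::real^'p^'n)) $ i = z$i - (1 / real CARD('n)) *\<^sub>R (\<Sum>j\<in>UNIV. z$j)"
  by (simp add: K_eq mm_diff_r H_row)

lemma normH_le: "(norm ((Hmat::real^'n^'n) ** (z::real^'p^'n)))^2 \<le> (norm z)^2"
proof -
  have Hz: "Hmat ** z = z - Kmat ** z" by (simp add: K_eq mm_diff_r)
  have o: "inner (Kmat ** z) (z - Kmat ** z) = 0"
    using KK_stack[of z] by (simp add: inner_diff_right sK' power2_norm_eq_inner)
  have "(norm z)^2 = (norm (Kmat ** z + (z - Kmat ** z)))^2" by simp
  also have "\<dots> = (norm (Kmat ** z))^2 + (norm (z - Kmat ** z))^2 + 2 * inner (Kmat ** z) (z - Kmat ** z)"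
    by (simp only: power2_norm_eq_inner inner_add_left inner_add_right inner_commute)
  finally have e: "(norm z)^2 = (norm (Kmat ** z))^2 + (norm (z - Kmat ** z))^2" using o by simp
  have "(norm (Hmat ** z))^2 = (norm (z - Kmat ** z))^2" by (subst Hz) (rule refl)
  moreover have "0 \<le> (norm (Kmat ** z))^2" by simp
  ultimately show ?thesis using e by linarith
qed

lemma lip_sq:
  assumes "norm (u - w) \<le> Lf * norm (y - z)"
  shows "(norm (u - w))^2 \<le> Lf^2 * (norm (y - z))^2"
proof -
  have "(norm (u - w))^2 \<le> (Lf * norm (y - z))^2" using assms by (intro power_mono) auto
  thus ?thesis by (simp add: power_mult_distrib)
qed

lemma est_le:
  fixes \<phi> :: "real^'p \<Rightarrow> real"
  assumes d: "\<And>y. GDERIV \<phi> y :> G y"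
    and lip: "\<And>y z. norm (G y - G z) \<le> Lf * norm (y - z)"
    and dp: "\<delta> > 0" and dm: "\<delta> \<le> dmax"
  shows "(norm (grad_est \<phi> x \<delta> - G x))^2 \<le> real CARD('p) * Lf^2 * dmax^2 / 4"
proof -
  have "(norm (grad_est \<phi> x \<delta> - G x))^2 \<le> real CARD('p) * Lf^2 * \<delta>^2 / 4" by (rule est_err[OF d lip dp])
  also have "\<dots> \<le> real CARD('p) * Lf^2 * dmax^2 / 4"
    using dp dm by (intro divide_right_mono mult_left_mono power_mono) auto
  finally show ?thesis .
qed


theorem lemma7:
  fixes a :: "real^'n^'n"
    and f :: "'n \<Rightarrow> real^'p \<Rightarrow> real"
    and g :: "'n \<Rightarrow> real^'p \<Rightarrow> real^'p"
    and Lf \<alpha> \<beta> \<eta> :: real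
    and x v :: "nat \<Rightarrow> real^'p^'n"
    and \<delta> :: "nat \<Rightarrow> 'n \<Rightarrow> real"
    and k :: nat
  assumes def_n: "n = real CARD('n)"
      and def_p: "p = real CARD('p)"
      and def_L: "L = laplacian a"
      and def_F: "F = (\<lambda>y. (1 / n) * (\<Sum>i\<in>UNIV. f i y))"
      and def_gradF: "gradF = (\<lambda>y. (1 / n) *\<^sub>R (\<Sum>i\<in>UNIV. g i y))"
      and def_fstar: "fstar = (INF y. F y)"
      and def_K: "K = (Kmat :: real^'n^'n)"
      and def_H: "H = (Hmat :: real^'n^'n)"
      and def_Q: "Q = pinv (laplacian a)"
      and def_xbar: "xbar = (\<lambda>j. (1 / n) *\<^sub>R (\<Sum>i\<in>UNIV. x j $ i))"
      and "\<delta>max = (\<lambda>j. Max (range (\<delta> j)))"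
      and def_hk: "hk = (\<lambda>j. (\<chi> i. grad_est (f i) (x j $ i) (\<delta> j i)) :: real^'p^'n)"
      and def_hbar: "hbar = (\<lambda>j. kron_act H (hk j))"
      and def_h0: "h0 = (\<lambda>j. (\<chi> i. grad_est (f i) (xbar j) (\<delta>max j)) :: real^'p^'n)"
      and def_g0bar: "g0bar = (\<lambda>j. (\<chi> i. gradF (xbar j)) :: real^'p^'n)"
      and def_w: "w = (\<lambda>j. v j + (1 / \<beta>) *\<^sub>R h0 j)"
      and def_U: "U = (\<lambda>j. (1/2) * wnorm2 K (x j) + (1/2) * wnorm2 (Q + (\<alpha> / \<beta>) *\<^sub>R K) (w j)
                     + inner (x j) (kron_act K (w j)) + n * (F (xbar j) - fstar))"
      and def_eps1: "eps1 = (\<alpha> - \<beta>) * rho2 L - (1/2) * (2 + 9 * Lf\<^sup>2)"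
      and def_eps2: "eps2 = \<beta>\<^sup>2 * rho L + (2 * \<alpha>\<^sup>2 + \<beta>\<^sup>2) * (rho L)\<^sup>2 + (15/2) * Lf\<^sup>2"
      and def_eps3: "eps3 = \<beta> - 1/2 - \<alpha> / (2 * \<beta>\<^sup>2) - 1 / (2 * \<beta> * rho2 L)"
      and def_eps4: "eps4 = 2 * \<beta>\<^sup>2 + 1/2"
      and def_eps5: "eps5 = 1/8 - 3 / (2 * \<beta>) * (1 / \<beta> + 1 / rho2 L + \<alpha> / \<beta>) * Lf\<^sup>2"
      and def_eps6: "eps6 = 3 / \<beta>\<^sup>2 * (1 + 1 / rho2 L + \<alpha> / \<beta>) * Lf\<^sup>2 + Lf * (1 + 3 * Lf) / 2"
      and def_eps12: "eps12 = ((1 / \<beta>\<^sup>2 + 1 / (2 * \<eta> * \<beta>)) * (1 / rho2 L + \<alpha> / \<beta>)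
                    + 1 / (2 * \<eta> * \<beta>\<^sup>2) + 1 / \<beta>\<^sup>2 + 1/2) * (3 * n * p * Lf\<^sup>2 / 4)"
      and def_eps11: "eps11 = (15 * \<eta> / 4 + 5 * \<eta>\<^sup>2) * (3 * n * p * Lf\<^sup>2 / 4) + eps12"
      and n2: "CARD('n) \<ge> 2"
      and graph: "weighted_undirected_graph a"
      and A1: "graph_connected a"
      and A2: "\<exists>xs. \<forall>y. F xs \<le> F y"
      and A3_grad: "\<And>i y. GDERIV (f i) y :> g i y"
      and A3_lip: "\<And>i y z. norm (g i y - g i z) \<le> Lf * norm (y - z)"
      and params: "\<alpha> > \<beta>" "\<beta> > 0" "\<eta> > 0"
      and delta_pos: "\<And>j i. \<delta> j i > 0"
      and v0: "(\<Sum>i\<in>UNIV. v 0 $ i) = 0"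
      and x_step: "\<And>j i. x (Suc j) $ i = x j $ i - \<eta> *\<^sub>R
                   (\<alpha> *\<^sub>R (\<Sum>l\<in>UNIV. L$i$l *\<^sub>R x j $ l) + \<beta> *\<^sub>R v j $ i
                    + grad_est (f i) (x j $ i) (\<delta> j i))"
      and v_step: "\<And>j i. v (Suc j) $ i = v j $ i + (\<eta> * \<beta>) *\<^sub>R (\<Sum>l\<in>UNIV. L$i$l *\<^sub>R x j $ l)"
  shows "U (Suc k) \<le> U k - \<eta> * (eps1 - \<eta> * eps2) * wnorm2 K (x k)
           - \<eta> * (eps3 - \<eta> * eps4) * wnorm2 K (w k)
           - \<eta> * (eps5 - \<eta> * eps6) * (norm (hbar k))\<^sup>2
           - \<eta> / 8 * (norm (g0bar k))\<^sup>2
           + eps11 * (\<delta>max k)\<^sup>2 + eps12 * (\<delta>max (Suc k))\<^sup>2"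
proof -
  interpret G: lapG a using graph A1 n2 by unfold_locales
  have bp: "\<beta> > 0" and ep: "\<eta> > 0" and ab: "\<alpha> > \<beta>" using params by auto
  have dmx: "\<delta>max = (\<lambda>j. Max (range (\<delta> j)))" by (rule assms(11))
  have npos: "n > 0" using def_n by simp
  have ppos: "p > 0" using def_p by simp
  have Lf0: "0 \<le> Lf"
  proof -
    obtain i0 :: 'n where True by simp
    obtain l0 :: 'p where True by simp
    have "norm (g i0 0 - g i0 (axis l0 1)) \<le> Lf * norm (0 - axis l0 (1::real))" by (rule A3_lip)
    hence "0 \<le> Lf * 1" by (metis norm_axis_1 norm_ge_zero norm_minus_commute order_trans diff_zero)
    thus ?thesis by simp
  qed
  have dmax_ge: "\<delta> j i \<le> \<delta>max j" for j i unfolding dmx by (intro Max_ge) auto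
  have dmax_pos: "\<delta>max j > 0" for j using dmax_ge[of j] delta_pos[of j] by (meson less_le_trans)
  have Lsum: "(\<Sum>i\<in>UNIV. (laplacian a ** z) $ i) = 0" for z :: "real^'p^'n"
  proof -
    have "(\<Sum>i\<in>UNIV. (laplacian a ** z) $ i) = (\<Sum>i\<in>UNIV. \<Sum>j\<in>UNIV. laplacian a$i$j *\<^sub>R z$j)"
      by (simp add: mm_row)
    also have "\<dots> = (\<Sum>j\<in>UNIV. \<Sum>i\<in>UNIV. laplacian a$i$j *\<^sub>R z$j)" by (rule sum.swap)
    also have "\<dots> = (\<Sum>j\<in>UNIV. (\<Sum>i\<in>UNIV. laplacian a$i$j) *\<^sub>R z$j)" by (simp add: scaleR_sum_left)
    also have "\<dots> = 0" by (simp add: lap_colsum[OF graph])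
    finally show ?thesis .
  qed
  have vsum: "(\<Sum>i\<in>UNIV. v j $ i) = 0" for j
  proof (induction j)
    case 0 show ?case using v0 by simp
  next
    case (Suc j)
    have "(\<Sum>i\<in>UNIV. v (Suc j) $ i) = (\<Sum>i\<in>UNIV. v j $ i) + (\<eta> * \<beta>) *\<^sub>R (\<Sum>i\<in>UNIV. (laplacian a ** x j) $ i)"
      by (simp add: v_step def_L mm_row sum.distrib scaleR_sum_right)
    thus ?case using Suc Lsum by simp
  qed
  have xS: "x (Suc k) = x k - \<eta> *\<^sub>R (\<alpha> *\<^sub>R (laplacian a ** x k) + \<beta> *\<^sub>R v k + hk k)"
    by (simp add: vec_eq_iff x_step def_L mm_row def_hk)
  have vS: "v (Suc k) = v k + (\<eta> * \<beta>) *\<^sub>R (laplacian a ** x k)"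
    by (simp add: vec_eq_iff v_step def_L mm_row)
  have KV: "Kmat ** v k = v k"
    by (simp add: vec_eq_iff K_row vsum)
  have Uf: "U j = PhiF (pinv (laplacian a)) \<alpha> \<beta> (x j) (w j) + n * (F (xbar j) - fstar)" for j
    by (simp add: def_U wnorm2_def kron_act_mm PhiF_def def_K def_Q)
  have wk: "w k = v k + (1/\<beta>) *\<^sub>R h0 k" by (simp add: def_w)
  have wS: "w (Suc k) = (v k + (\<eta> * \<beta>) *\<^sub>R (laplacian a ** x k)) + (1/\<beta>) *\<^sub>R h0 (Suc k)"
    by (simp add: def_w vS)
  have core: "PhiF (pinv (laplacian a)) \<alpha> \<beta> (x (Suc k)) (w (Suc k)) - PhiF (pinv (laplacian a)) \<alpha> \<beta> (x k) (w k) \<le>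
      - \<eta> * (\<alpha> - \<beta>) * inner (x k) (laplacian a ** x k)
      + (\<eta>/2 * (norm (Kmat ** x k))^2 + \<eta>/2 * (norm (Kmat ** (hk k - h0 k)))^2)
      + (\<eta>/2 * (norm (Kmat ** (hk k - h0 k)))^2 + \<eta>/2 * (norm (Kmat ** w k))^2)
      + (1 / (2*\<eta>*\<beta>) * (1 / rho2 (laplacian a) + \<alpha> / \<beta>) * (norm (h0 (Suc k) - h0 k))^2 + \<eta> / (2*\<beta>) * (1 / rho2 (laplacian a) + \<alpha> / \<beta>) * (norm (Kmat ** w k))^2)
      + (\<eta>/2 * (norm (Kmat ** x k))^2 + 1 / (2*\<eta>*\<beta>^2) * (norm (h0 (Suc k) - h0 k))^2)
      - \<eta> * \<beta> * (norm (Kmat ** w k))^2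
      + (\<eta>^2 * \<beta>^2 * inner (x k) (laplacian a ** x k) + \<eta>^2 * \<alpha> * \<beta> * (norm (laplacian a ** x k))^2 + 1 / \<beta>^2 * (1 / rho2 (laplacian a) + \<alpha> / \<beta>) * (norm (h0 (Suc k) - h0 k))^2)
      + \<eta>^2 * (3/2) * (\<alpha>^2 * (norm (laplacian a ** x k))^2 + \<beta>^2 * (norm (Kmat ** w k))^2 + (norm (Kmat ** (hk k - h0 k)))^2)
      + (- (\<eta>^2 * \<alpha> * \<beta> * (norm (laplacian a ** x k))^2) + \<eta>^2 * \<beta>^2 / 2 * ((norm (Kmat ** w k))^2 + (norm (laplacian a ** x k))^2)
           + \<eta>^2 * (\<beta>^2 / 2 * (norm (laplacian a ** x k))^2 + 1/2 * (norm (Kmat ** (hk k - h0 k)))^2))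
      + (\<eta>^2 * \<alpha>^2 / 2 * (norm (laplacian a ** x k))^2 + 1 / (2*\<beta>^2) * (norm (h0 (Suc k) - h0 k))^2 + \<eta>^2 / 2 * (norm (Kmat ** w k))^2
           + 1/2 * (norm (h0 (Suc k) - h0 k))^2 + \<eta>^2 / 2 * (norm (Kmat ** (hk k - h0 k)))^2 + 1 / (2*\<beta>^2) * (norm (h0 (Suc k) - h0 k))^2)"
    using G.core_vec[OF bp ep ab KV, where X="x k" and hh="hk k" and hz="h0 k" and hp="h0 (Suc k)"]
    unfolding xS[symmetric] wS[symmetric] wk[symmetric] by simp
  define c where "c = 3 * n * p * Lf^2 / 4"
  have Krow_x: "(Kmat ** x j) $ i = x j $ i - xbar j" for j i by (simp add: K_row def_xbar def_n)
  have nA_sum: "(norm (Kmat ** x j))^2 = (\<Sum>i\<in>UNIV. (norm (x j $ i - xbar j))^2)" for j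
    by (simp add: stack_norm Krow_x)
  have HE: "(norm (Kmat ** (hk k - h0 k)))^2 \<le> 3 * Lf^2 * (norm (Kmat ** x k))^2 + 2 * c * (\<delta>max k)^2"
  proof -
    have "(norm (Kmat ** (hk k - h0 k)))^2 \<le> (norm (hk k - h0 k))^2" by (rule normK_le)
    also have "\<dots> = (\<Sum>i\<in>UNIV. (norm (hk k $ i - h0 k $ i))^2)" by (simp add: stack_norm)
    also have "\<dots> \<le> (\<Sum>i\<in>UNIV. 3 * (Lf^2 * (norm (x k $ i - xbar k))^2) + 6 * (real CARD('p) * Lf^2 * (\<delta>max k)^2 / 4))"
    proof (rule sum_mono)
      fix i
      define e1 where "e1 = grad_est (f i) (x k $ i) (\<delta> k i) - g i (x k $ i)"
      define e2 where "e2 = g i (x k $ i) - g i (xbar k)"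
      define e3 where "e3 = g i (xbar k) - grad_est (f i) (xbar k) (\<delta>max k)"
      have eq: "hk k $ i - h0 k $ i = e1 + e2 + e3" by (simp add: def_hk def_h0 e1_def e2_def e3_def)
      define P where "P = real CARD('p) * Lf^2 * (\<delta>max k)^2 / 4"
      define Q where "Q = Lf^2 * (norm (x k $ i - xbar k))^2"
      have 1: "(norm e1)^2 \<le> P"
        unfolding e1_def P_def by (rule est_le[OF A3_grad A3_lip delta_pos dmax_ge])
      have 2: "(norm e2)^2 \<le> Q" unfolding e2_def Q_def by (rule lip_sq[OF A3_lip])
      have 3: "(norm e3)^2 \<le> P"
        unfolding e3_def P_def using est_err[OF A3_grad A3_lip dmax_pos] by (simp add: norm_minus_commute)
      have "(norm (hk k $ i - h0 k $ i))^2 \<le> 3 * ((norm e1)^2 + (norm e2)^2 + (norm e3)^2)" unfolding eq by (rule norm3)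
      hence "(norm (hk k $ i - h0 k $ i))^2 \<le> 3 * Q + 6 * P" using 1 2 3 by (smt (verit))
      thus "(norm (hk k $ i - h0 k $ i))^2 \<le> 3 * (Lf^2 * (norm (x k $ i - xbar k))^2) + 6 * (real CARD('p) * Lf^2 * (\<delta>max k)^2 / 4)"
        by (simp only: P_def Q_def)
    qed
    also have "\<dots> = 3 * Lf^2 * (norm (Kmat ** x k))^2 + 2 * c * (\<delta>max k)^2"
      unfolding nA_sum c_def by (simp add: sum.distrib sum_distrib_left[symmetric] def_n def_p algebra_simps)
    finally show ?thesis .
  qed
  define mh where "mh = (1 / n) *\<^sub>R (\<Sum>i\<in>UNIV. hk k $ i)"
  have sumS: "(\<Sum>i\<in>UNIV. x (Suc k) $ i) = (\<Sum>i\<in>UNIV. x k $ i) - \<eta> *\<^sub>R (\<Sum>i\<in>UNIV. hk k $ i)"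
  proof -
    have "(\<Sum>i\<in>UNIV. x (Suc k) $ i) = (\<Sum>i\<in>UNIV. x k $ i)
       - \<eta> *\<^sub>R (\<alpha> *\<^sub>R (\<Sum>i\<in>UNIV. (laplacian a ** x k) $ i) + \<beta> *\<^sub>R (\<Sum>i\<in>UNIV. v k $ i) + (\<Sum>i\<in>UNIV. hk k $ i))"
      by (simp add: xS sum_subtractf sum.distrib scaleR_sum_right scaleR_right_distrib)
    thus ?thesis by (simp add: Lsum vsum)
  qed
  have xbS: "xbar (Suc k) = xbar k - \<eta> *\<^sub>R mh"
    unfolding def_xbar mh_def sumS by (simp add: scaleR_diff_right)
  have hbar_row: "hbar k $ i = mh" for i by (simp add: def_hbar def_H kron_act_mm H_row mh_def def_n)
  have hb_norm: "(norm (hbar k))^2 = n * (norm mh)^2" by (simp add: stack_norm hbar_row def_n)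
  have HD: "(norm (h0 (Suc k) - h0 k))^2 \<le> 3 * Lf^2 * \<eta>^2 * (norm (hbar k))^2 + c * (\<delta>max (Suc k))^2 + c * (\<delta>max k)^2"
  proof -
    have "(norm (h0 (Suc k) - h0 k))^2 = (\<Sum>i\<in>UNIV. (norm (h0 (Suc k) $ i - h0 k $ i))^2)" by (simp add: stack_norm)
    also have "\<dots> \<le> (\<Sum>i\<in>(UNIV::'n set). 3 * (real CARD('p) * Lf^2 * (\<delta>max (Suc k))^2 / 4) + 3 * (Lf^2 * (\<eta>^2 * (norm mh)^2))
                + 3 * (real CARD('p) * Lf^2 * (\<delta>max k)^2 / 4))"
    proof (rule sum_mono)
      fix i
      define e1 where "e1 = grad_est (f i) (xbar (Suc k)) (\<delta>max (Suc k)) - g i (xbar (Suc k))"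
      define e2 where "e2 = g i (xbar (Suc k)) - g i (xbar k)"
      define e3 where "e3 = g i (xbar k) - grad_est (f i) (xbar k) (\<delta>max k)"
      have eq: "h0 (Suc k) $ i - h0 k $ i = e1 + e2 + e3" by (simp add: def_h0 e1_def e2_def e3_def)
      define P1 where "P1 = real CARD('p) * Lf^2 * (\<delta>max (Suc k))^2 / 4"
      define P0 where "P0 = real CARD('p) * Lf^2 * (\<delta>max k)^2 / 4"
      define Q where "Q = Lf^2 * (\<eta>^2 * (norm mh)^2)"
      have 1: "(norm e1)^2 \<le> P1"
        unfolding e1_def P1_def by (rule est_err[OF A3_grad A3_lip dmax_pos])
      have "(norm e2)^2 \<le> Lf^2 * (norm (xbar (Suc k) - xbar k))^2" unfolding e2_def by (rule lip_sq[OF A3_lip])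
      also have "(norm (xbar (Suc k) - xbar k))^2 = \<eta>^2 * (norm mh)^2" using ep by (simp add: xbS power_mult_distrib)
      finally have 2: "(norm e2)^2 \<le> Q" unfolding Q_def .
      have 3: "(norm e3)^2 \<le> P0"
        unfolding e3_def P0_def using est_err[OF A3_grad A3_lip dmax_pos] by (simp add: norm_minus_commute)
      have "(norm (h0 (Suc k) $ i - h0 k $ i))^2 \<le> 3 * ((norm e1)^2 + (norm e2)^2 + (norm e3)^2)" unfolding eq by (rule norm3)
      hence "(norm (h0 (Suc k) $ i - h0 k $ i))^2 \<le> 3 * P1 + 3 * Q + 3 * P0" using 1 2 3 by (smt (verit))
      thus "(norm (h0 (Suc k) $ i - h0 k $ i))^2 \<le> 3 * (real CARD('p) * Lf^2 * (\<delta>max (Suc k))^2 / 4) + 3 * (Lf^2 * (\<eta>^2 * (norm mh)^2))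
                + 3 * (real CARD('p) * Lf^2 * (\<delta>max k)^2 / 4)"
        by (simp only: P1_def P0_def Q_def)
    qed
    also have "\<dots> = 3 * Lf^2 * \<eta>^2 * (norm (hbar k))^2 + c * (\<delta>max (Suc k))^2 + c * (\<delta>max k)^2"
      unfolding hb_norm c_def by (simp add: def_n def_p algebra_simps)
    finally show ?thesis .
  qed
  define gv :: "real^'p^'n" where "gv = (\<chi> i. g i (xbar k))"
  have g0H: "g0bar k - hbar k = Hmat ** (gv - hk k)"
    by (simp add: vec_eq_iff H_row def_g0bar def_gradF hbar_row mh_def gv_def def_n sum_subtractf scaleR_diff_right)
  have HG: "(norm (g0bar k - hbar k))^2 \<le> 3 * Lf^2 * (norm (Kmat ** x k))^2 + c * (\<delta>max k)^2 / 2"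
  proof -
    have "(norm (g0bar k - hbar k))^2 \<le> (norm (hk k - gv))^2"
      unfolding g0H using normH_le[of "gv - hk k"] by (simp add: norm_minus_commute)
    also have "\<dots> = (\<Sum>i\<in>UNIV. (norm (hk k $ i - gv $ i))^2)" by (simp add: stack_norm)
    also have "\<dots> \<le> (\<Sum>i\<in>UNIV. 3 * (Lf^2 * (norm (x k $ i - xbar k))^2) + 3/2 * (real CARD('p) * Lf^2 * (\<delta>max k)^2 / 4))"
    proof (rule sum_mono)
      fix i
      define e1 where "e1 = grad_est (f i) (x k $ i) (\<delta> k i) - g i (x k $ i)"
      define e2 where "e2 = g i (x k $ i) - g i (xbar k)"
      have eq: "hk k $ i - gv $ i = e2 + e1" by (simp add: def_hk gv_def e1_def e2_def)
      define P where "P = real CARD('p) * Lf^2 * (\<delta>max k)^2 / 4"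
      define Q where "Q = Lf^2 * (norm (x k $ i - xbar k))^2"
      have 1: "(norm e1)^2 \<le> P"
        unfolding e1_def P_def by (rule est_le[OF A3_grad A3_lip delta_pos dmax_ge])
      have 2: "(norm e2)^2 \<le> Q" unfolding e2_def Q_def by (rule lip_sq[OF A3_lip])
      have "(norm (hk k $ i - gv $ i))^2 \<le> 3 * (norm e2)^2 + 3/2 * (norm e1)^2" unfolding eq by (rule norm2_3)
      moreover have "3 * (norm e2)^2 + 3/2 * (norm e1)^2 \<le> 3 * Q + 3/2 * P"
        using 1 2 by (intro add_mono mult_left_mono) auto
      ultimately have "(norm (hk k $ i - gv $ i))^2 \<le> 3 * Q + 3/2 * P" by (rule order_trans)
      thus "(norm (hk k $ i - gv $ i))^2 \<le> 3 * (Lf^2 * (norm (x k $ i - xbar k))^2) + 3/2 * (real CARD('p) * Lf^2 * (\<delta>max k)^2 / 4)"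
        by (simp only: P_def Q_def)
    qed
    also have "\<dots> = 3 * Lf^2 * (norm (Kmat ** x k))^2 + c * (\<delta>max k)^2 / 2"
      unfolding nA_sum c_def by (simp add: sum.distrib sum_distrib_left[symmetric] def_n def_p algebra_simps)
    finally show ?thesis .
  qed
  have HF: "n * (F (xbar (Suc k)) - fstar) - n * (F (xbar k) - fstar) \<le> \<eta>/2 * (norm (g0bar k - hbar k))^2
        - \<eta>/2 * (norm (g0bar k))^2 - \<eta>/2 * (norm (hbar k))^2 + Lf/2 * \<eta>^2 * (norm (hbar k))^2"
  proof -
    have Fd: "GDERIV F y :> gradF y" for y
    proof -
      have s1: "((\<lambda>y. \<Sum>i\<in>UNIV. f i y) has_derivative (\<lambda>h. \<Sum>i\<in>UNIV. inner h (g i y))) (at y)"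
        using A3_grad unfolding gderiv_def by (intro has_derivative_sum) auto
      have "((\<lambda>y. (1/n) * (\<Sum>i\<in>UNIV. f i y)) has_derivative (\<lambda>h. (1/n) * (\<Sum>i\<in>UNIV. inner h (g i y)))) (at y)"
        by (rule has_derivative_mult_right[OF s1])
      moreover have "(\<lambda>h. (1/n) * (\<Sum>i\<in>UNIV. inner h (g i y))) = (\<lambda>h. inner h ((1/n) *\<^sub>R (\<Sum>i\<in>UNIV. g i y)))"
        by (simp add: inner_sum_right)
      ultimately show ?thesis unfolding gderiv_def def_F def_gradF by simp
    qed
    have Flip: "norm (gradF y - gradF z) \<le> Lf * norm (y - z)" for y z
    proof -
      have "gradF y - gradF z = (1/n) *\<^sub>R (\<Sum>i\<in>UNIV. g i y - g i z)"
        by (simp add: def_gradF sum_subtractf scaleR_diff_right)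
      hence "norm (gradF y - gradF z) = (1/n) * norm (\<Sum>i\<in>UNIV. g i y - g i z)" using npos by simp
      also have "\<dots> \<le> (1/n) * (\<Sum>i\<in>(UNIV::'n set). Lf * norm (y - z))"
        using npos by (intro mult_left_mono order_trans[OF norm_sum sum_mono] A3_lip) auto
      also have "\<dots> = Lf * norm (y - z)" using npos by (simp add: def_n)
      finally show ?thesis .
    qed
    have desc: "F (xbar (Suc k)) \<le> F (xbar k) + inner (gradF (xbar k)) (xbar (Suc k) - xbar k) + Lf / 2 * (norm (xbar (Suc k) - xbar k))^2"
      by (rule descent_upper[OF Fd Flip])
    have ig: "inner (g0bar k) (hbar k) = n * inner (gradF (xbar k)) mh"
      by (simp add: inner_vec_def def_g0bar hbar_row def_n)
    have pol: "inner (g0bar k) (hbar k) = 1/2 * ((norm (g0bar k))^2 + (norm (hbar k))^2 - (norm (g0bar k - hbar k))^2)"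
      by (simp add: power2_norm_eq_inner inner_diff_left inner_diff_right inner_commute)
    have "n * (F (xbar (Suc k)) - fstar) - n * (F (xbar k) - fstar) = n * (F (xbar (Suc k)) - F (xbar k))"
      by (simp add: algebra_simps)
    also have "\<dots> \<le> n * (inner (gradF (xbar k)) (xbar (Suc k) - xbar k) + Lf / 2 * (norm (xbar (Suc k) - xbar k))^2)"
      using desc npos by (intro mult_left_mono) auto
    also have "\<dots> = - \<eta> * inner (g0bar k) (hbar k) + Lf/2 * \<eta>^2 * (norm (hbar k))^2"
      using ep unfolding ig hb_norm xbS by (simp add: power_mult_distrib algebra_simps)
    also have "\<dots> = \<eta>/2 * (norm (g0bar k - hbar k))^2 - \<eta>/2 * (norm (g0bar k))^2 - \<eta>/2 * (norm (hbar k))^2 + Lf/2 * \<eta>^2 * (norm (hbar k))^2"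
      unfolding pol by (simp add: algebra_simps)
    finally show ?thesis .
  qed
  note fin = final_arith[where \<eta>=\<eta> and \<alpha>=\<alpha> and \<beta>=\<beta> and \<rho>="rho (laplacian a)" and rtwo="rho2 (laplacian a)"
     and Lf=Lf and c=c and d="(\<delta>max k)^2" and d'="(\<delta>max (Suc k))^2" and n=n and p=p
     and qL="inner (x k) (laplacian a ** x k)" and nA="(norm (Kmat ** x k))^2" and Wk="(norm (Kmat ** w k))^2"
     and E="(norm (Kmat ** (hk k - h0 k)))^2" and D="(norm (h0 (Suc k) - h0 k))^2" and Lxx="(norm (laplacian a ** x k))^2"
     and hb="(norm (hbar k))^2" and g="(norm (g0bar k))^2" and G="(norm (g0bar k - hbar k))^2"
     and dPhi="PhiF (pinv (laplacian a)) \<alpha> \<beta> (x (Suc k)) (w (Suc k)) - PhiF (pinv (laplacian a)) \<alpha> \<beta> (x k) (w k)"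
     and Fd="n * (F (xbar (Suc k)) - fstar) - n * (F (xbar k) - fstar)"
     and \<kappa>="1 / rho2 (laplacian a) + \<alpha> / \<beta>"
     and epsA=eps1 and epsB=eps2 and epsC=eps3 and epsD=eps4 and epsE=eps5 and epsF=eps6 and epsK=eps11 and epsL=eps12]
  have r2: "0 < rho2 (laplacian a)" using G.rho2_props by blast
  have "PhiF (pinv (laplacian a)) \<alpha> \<beta> (x (Suc k)) (w (Suc k)) - PhiF (pinv (laplacian a)) \<alpha> \<beta> (x k) (w k)
      + (n * (F (xbar (Suc k)) - fstar) - n * (F (xbar k) - fstar)) \<le>
      - \<eta> * (eps1 - \<eta> * eps2) * (norm (Kmat ** x k))^2 - \<eta> * (eps3 - \<eta> * eps4) * (norm (Kmat ** w k))^2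
           - \<eta> * (eps5 - \<eta> * eps6) * (norm (hbar k))^2 - \<eta> / 8 * (norm (g0bar k))^2 + eps11 * (\<delta>max k)^2 + eps12 * (\<delta>max (Suc k))^2"
  proof (rule fin)
    show "\<eta> > 0" "\<beta> > 0" "\<alpha> > \<beta>" "rho2 (laplacian a) > 0" "Lf \<ge> 0" "n \<ge> 0" "p \<ge> 0"
      "(\<delta>max k)^2 \<ge> 0" "(\<delta>max (Suc k))^2 \<ge> 0" "(norm (hbar k))^2 \<ge> 0" "(norm (g0bar k))^2 \<ge> 0"
      using bp ep ab r2 Lf0 npos ppos by auto
  qed (rule c_def refl core HF HE HD HG G.S_rho2 G.S_rho G.S_rhosq def_eps1[unfolded def_L] def_eps2[unfolded def_L]
         def_eps3[unfolded def_L] def_eps4 def_eps5[unfolded def_L] def_eps6[unfolded def_L] def_eps12[unfolded def_L] def_eps11)+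
  moreover have "wnorm2 K (x k) = (norm (Kmat ** x k))^2" "wnorm2 K (w k) = (norm (Kmat ** w k))^2"
    by (simp_all add: wnorm2_def def_K kron_act_mm KK_stack)
  ultimately show ?thesis using Uf[of k] Uf[of "Suc k"] by simp
qed


end
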